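(* Let $M$ be a path-connected pre-$\Delta$-monoid with identity $e$. If $\alpha_n\in\Omega(M,e)$ is a null-sequence and $\phi:\mathbb{N}\to\mathbb{N}$ is a bijection, then $\prod_{n=1}^\infty\alpha_n\simeq\prod_{n=1}^\infty\alpha_{\phi(n)}$ by a path-homotopy with image in $\mathrm{Im}\left(\prod_{n=1}^\infty\alpha_n\right)\ast\mathrm{Im}\left(\prod_{n=1}^\infty\alpha_n\right)$.
   Context: A pre-$\Delta$-monoid is a space $M$ with an associative operation $\ast$ with identity $e$ such that for any continuous paths $\alpha,\beta:[0,1]\to M$, the pointwise product $t\mapsto\alpha(t)\ast\beta(t)$ is continuous. For $A,B\subseteq M$, $A\ast B=\{a\ast b\mid a\in A,b\in B\}$. A sequence of loops $\alpha_n\in\Omega(M,e)$ is a null-sequence if every neighborhood of $e$ contains $\mathrm{Im}(\alpha_n)$ for all but finitely many $n$; its infinite concatenation $\prod_{n=1}^\infty\alpha_n$ is the loop equal to (a linear reparametrization of) $\alpha_n$ on $[\frac{n-1}{n},\frac{n}{n+1}]$ and sending $1$ to $e$. *)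

theory Defs
  imports "HOL-Analysis.Analysis"
begin

definition pre_Delta_monoid :: "('a::topological_space \<Rightarrow> 'a \<Rightarrow> 'a) \<Rightarrow> 'a \<Rightarrow> bool" where
  "pre_Delta_monoid mul e \<longleftrightarrow>
     (\<forall>x y z. mul (mul x y) z = mul x (mul y z)) \<and>
     (\<forall>x. mul e x = x \<and> mul x e = x) \<and>
     (\<forall>\<alpha> \<beta>. path \<alpha> \<and> path \<beta> \<longrightarrow> path (\<lambda>t. mul (\<alpha> t) (\<beta> t)))"

definition set_mult :: "('a \<Rightarrow> 'a \<Rightarrow> 'a) \<Rightarrow> 'a set \<Rightarrow> 'a set \<Rightarrow> 'a set" where
  "set_mult mul A B = {mul a b | a b. a \<in> A \<and> b \<in> B}"

definition loop_at :: "'a::topological_space \<Rightarrow> (real \<Rightarrow> 'a) \<Rightarrow> bool" where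
  "loop_at e \<gamma> \<longleftrightarrow> path \<gamma> \<and> pathstart \<gamma> = e \<and> pathfinish \<gamma> = e"

definition null_sequence :: "'a::topological_space \<Rightarrow> (nat \<Rightarrow> real \<Rightarrow> 'a) \<Rightarrow> bool" where
  "null_sequence e \<alpha> \<longleftrightarrow>
     (\<forall>n. loop_at e (\<alpha> n)) \<and>
     (\<forall>U. open U \<and> e \<in> U \<longrightarrow> (\<forall>\<^sub>F n in sequentially. path_image (\<alpha> n) \<subseteq> U))"

text \<open>Infinite concatenation. Sequences are indexed from 0: the k-th loop
  (k = n-1 in the paper's 1-based indexing) is run, linearly reparametrised,
  on [k/(k+1), (k+1)/(k+2)], and 1 is sent to e.\<close>
definition inf_concat :: "'a \<Rightarrow> (nat \<Rightarrow> real \<Rightarrow> 'a) \<Rightarrow> real \<Rightarrow> 'a" where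
  "inf_concat e \<alpha> t =
     (if t < 1 then
        (let k = nat \<lfloor>1 / (1 - t)\<rfloor> - 1
         in \<alpha> k ((t - real k / (real k + 1)) * ((real k + 1) * (real k + 2))))
      else e)"

end

theory Submission
  imports Defs
begin

definition slot :: "real \<Rightarrow> nat" where
  "slot x = (LEAST j. x < 1 - (1/2)^(Suc j))"

definition loc :: "real \<Rightarrow> real" where
  "loc x = 2^(Suc (slot x)) * (x - 1) + 2"

definition gpt :: "nat \<Rightarrow> real \<Rightarrow> real" where
  "gpt n y = 1 - (1/2)^n + y * (1/2)^(Suc n)"

definition KK :: "'a \<Rightarrow> (nat \<Rightarrow> real \<Rightarrow> 'a) \<Rightarrow> real \<Rightarrow> 'a" where
  "KK e \<beta> t = (if t < 1 then \<beta> (slot t) (loc t) else e)"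

lemma half_pow_mono: "m \<le> n \<Longrightarrow> (1/2::real)^n \<le> (1/2)^m"
  by (simp add: power_decreasing)

lemma half_pow_strict: "m < n \<Longrightarrow> (1/2::real)^n < (1/2)^m"
  by (simp add: power_strict_decreasing)

lemma slot_eq:
  assumes "1 - (1/2)^j \<le> x" "x < 1 - (1/2)^(Suc j)"
  shows "slot x = j"
  unfolding slot_def
proof (rule Least_equality)
  show "x < 1 - (1/2)^(Suc j)" by fact
  fix k assume k: "x < 1 - (1/2::real)^(Suc k)"
  show "j \<le> k"
  proof (rule ccontr)
    assume "\<not> j \<le> k"
    then have "Suc k \<le> j" by simp
    then have "(1/2::real)^j \<le> (1/2)^(Suc k)" by (rule half_pow_mono)
    with assms(1) k show False by linarith
  qed
qed

lemma slot_bounds: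
  assumes "0 \<le> x" "x < 1"
  shows "1 - (1/2)^(slot x) \<le> x \<and> x < 1 - (1/2)^(Suc (slot x))"
proof -
  obtain n where n: "(1/2::real)^n < 1 - x"
    using real_arch_pow_inv[of "1 - x" "1/2"] assms by auto
  have ex: "\<exists>j. x < 1 - (1/2::real)^(Suc j)"
  proof
    have "(1/2::real)^(Suc n) \<le> (1/2)^n" by (rule half_pow_mono) simp
    then show "x < 1 - (1/2::real)^(Suc n)" using n by linarith
  qed
  have up: "x < 1 - (1/2)^(Suc (slot x))"
    unfolding slot_def by (rule LeastI_ex[OF ex])
  have low: "1 - (1/2)^(slot x) \<le> x"
  proof (cases "slot x")
    case 0 then show ?thesis using assms by simp
  next
    case (Suc k)
    then have "\<not> x < 1 - (1/2)^(Suc k)"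
      using not_less_Least[of k "\<lambda>j. x < 1 - (1/2::real)^(Suc j)"] unfolding slot_def by simp
    then show ?thesis using Suc by simp
  qed
  show ?thesis using up low by simp
qed

lemma gpt_bounds:
  assumes "0 \<le> y" "y < 1"
  shows "1 - (1/2)^n \<le> gpt n y" "gpt n y < 1 - (1/2)^(Suc n)"
proof -
  have "y * (1/2::real)^n < 1 * (1/2)^n" by (rule mult_strict_right_mono) (use assms in auto)
  moreover have "0 \<le> y * (1/2::real)^n" using assms by simp
  moreover have "y * (1/2::real)^(Suc n) = (y * (1/2)^n) / 2" by simp
  moreover have "(1/2::real)^(Suc n) = (1/2)^n / 2" by simp
  ultimately show "1 - (1/2)^n \<le> gpt n y" "gpt n y < 1 - (1/2)^(Suc n)"
    unfolding gpt_def by linarith+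
qed

lemma gpt_less_1: "0 \<le> y \<Longrightarrow> y < 1 \<Longrightarrow> gpt n y < 1"
proof -
  assume "0 \<le> y" "y < 1"
  then have "gpt n y < 1 - (1/2)^(Suc n)" by (rule gpt_bounds)
  moreover have "(0::real) < (1/2)^(Suc n)" by simp
  ultimately show ?thesis by linarith
qed

lemma slot_gpt: "0 \<le> y \<Longrightarrow> y < 1 \<Longrightarrow> slot (gpt n y) = n"
  using gpt_bounds slot_eq by blast

lemma loc_gpt: "0 \<le> y \<Longrightarrow> y < 1 \<Longrightarrow> loc (gpt n y) = y"
  unfolding loc_def slot_gpt
  by (simp add: gpt_def algebra_simps power_mult_distrib[symmetric])

lemma gpt_rep:
  assumes "0 \<le> x" "x < 1"
  shows "x = gpt (slot x) (loc x) \<and> 0 \<le> loc x \<and> loc x < 1"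
proof -
  define j where "j = slot x"
  have b: "1 - (1/2)^j \<le> x" "x < 1 - (1/2)^(Suc j)"
    using slot_bounds[OF assms] j_def by auto
  have p: "(2::real)^(Suc j) * (1/2)^(Suc j) = 1"
    by (simp add: power_mult_distrib[symmetric])
  have p2: "(2::real)^(Suc j) * (1/2)^j = 2"
    by (simp add: power_mult_distrib[symmetric])
  have "loc x = 2^(Suc j) * (x - 1) + 2" unfolding loc_def j_def ..
  moreover have "gpt j (2^(Suc j) * (x - 1) + 2) = x"
    unfolding gpt_def using p p2 by (simp add: algebra_simps)
  moreover have "0 \<le> 2^(Suc j) * (x - 1) + 2"
  proof -
    have "(2::real)^(Suc j) * (1 - x) \<le> 2^(Suc j) * (1/2)^j"
      using b by (intro mult_left_mono) auto
    then show ?thesis using p2 by (simp add: algebra_simps)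
  qed
  moreover have "2^(Suc j) * (x - 1) + 2 < (1::real)"
  proof -
    have "(2::real)^(Suc j) * (1/2)^(Suc j) < 2^(Suc j) * (1 - x)"
      using b by (intro mult_strict_left_mono) auto
    then show ?thesis using p by (simp add: algebra_simps)
  qed
  ultimately show ?thesis by (simp add: j_def)
qed

lemma gpt_cases:
  assumes "0 \<le> x" "x \<le> 1"
  obtains "x = 1" | n y where "0 \<le> y" "y < 1" "x = gpt n y"
  using gpt_rep assms by (cases "x = 1") force+

lemma KK_gpt: "0 \<le> y \<Longrightarrow> y < 1 \<Longrightarrow> KK e \<beta> (gpt n y) = \<beta> n y"
  using gpt_less_1[of y n] unfolding KK_def by (simp add: slot_gpt loc_gpt)

lemma gpt_one: "gpt n 1 = gpt (Suc n) 0"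
  by (simp add: gpt_def)

lemma gpt_zero: "gpt n 0 = 1 - (1/2)^n"
  by (simp add: gpt_def)

lemma gpt_shift: "k \<le> n \<Longrightarrow> 1 - 2^k * (1 - gpt n y) = gpt (n - k) y"
proof -
  assume "k \<le> n"
  then obtain d where d: "n = k + d" by (metis le_add_diff_inverse)
  have "(2::real)^k * (1/2)^(k + d) = (1/2)^d"
    by (simp add: power_add power_mult_distrib[symmetric])
  moreover have "(2::real)^k * (1/2)^(Suc (k + d)) = (1/2)^(Suc d)"
    by (simp add: power_add power_mult_distrib[symmetric])
  ultimately show ?thesis unfolding gpt_def d by (simp add: algebra_simps)
qed

lemma gpt_less_iff:
  assumes "0 \<le> y" "y < 1" "0 \<le> y'" "y' < 1"
  shows "gpt n y < gpt m y' \<longleftrightarrow> n < m \<or> (n = m \<and> y < y')"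
proof -
  have A: "gpt n y < gpt m y'" if "n < m" "0 \<le> y" "y < 1" "0 \<le> y'" "y' < 1" for n m y y'
  proof -
    have "gpt n y < 1 - (1/2)^(Suc n)" by (rule gpt_bounds) fact+
    also have "\<dots> \<le> 1 - (1/2)^m" using half_pow_mono[of "Suc n" m] that by simp
    also have "\<dots> \<le> gpt m y'" by (rule gpt_bounds) fact+
    finally show ?thesis .
  qed
  show ?thesis
  proof (cases n m rule: linorder_cases)
    case less then show ?thesis using A assms by auto
  next
    case equal then show ?thesis by (auto simp: gpt_def)
  next
    case greater then show ?thesis using A[of m n y' y] assms by auto
  qed
qed

lemma slot_loc_low:
  assumes "0 \<le> s" "s < 1/2"
  shows "slot s = 0" "loc s = 2 * s"
proof -
  show "slot s = 0" by (rule slot_eq) (use assms in auto)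
  then show "loc s = 2 * s" unfolding loc_def by simp
qed

lemma slot_loc_high:
  assumes "1/2 \<le> s" "s < 1"
  shows "slot s = Suc (slot (2 * s - 1))" "loc s = loc (2 * s - 1)"
proof -
  obtain n y where ny: "0 \<le> y" "y < 1" "s = gpt n y"
    using gpt_rep[of s] assms by auto
  have "n \<noteq> 0"
  proof
    assume "n = 0"
    then have "gpt n y < gpt 1 0" using ny gpt_less_iff[of y 0 n 1] by simp
    then show False using assms ny by (simp add: gpt_def)
  qed
  then have e: "2 * s - 1 = gpt (n - 1) y"
    using gpt_shift[of 1 n y] ny by simp
  show "slot s = Suc (slot (2 * s - 1))" "loc s = loc (2 * s - 1)"
    using e ny \<open>n \<noteq> 0\<close> by (simp_all add: slot_gpt loc_gpt)
qed

lemma glue_cont_N: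
  fixes f :: "nat \<Rightarrow> real \<times> 'b::topological_space \<Rightarrow> 'c::topological_space"
  assumes T: "closed T"
    and "\<And>m. continuous_on ({0..1} \<times> T) (f m)"
    and "\<And>m t. t \<in> T \<Longrightarrow> f m (1,t) = f (Suc m) (0,t)"
  shows "continuous_on ({0..1 - (1/2)^N} \<times> T) (\<lambda>p. f (slot (fst p)) (loc (fst p), snd p))"
  using assms(2,3)
proof (induction N arbitrary: f)
  case 0
  have s0: "slot 0 = 0" "loc 0 = 0" using slot_loc_low[of 0] by auto
  show ?case
  proof (rule continuous_on_eq)
    show "continuous_on ({0..1 - (1/2)^0} \<times> T) (f 0)"
      by (rule continuous_on_subset[OF 0(1)]) auto
  next
    fix p assume "p \<in> {0..1 - (1/2::real)^0} \<times> T"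
    then show "f 0 p = f (slot (fst p)) (loc (fst p), snd p)"
      using s0 by (cases p) auto
  qed
next
  case (Suc N)
  define G where "G = (\<lambda>p. f (slot (fst p)) (loc (fst p), snd p))"
  have c1: "continuous_on ({0..1/2} \<times> T) G"
  proof (rule continuous_on_eq)
    show "continuous_on ({0..1/2} \<times> T) (\<lambda>p. f 0 (2 * fst p, snd p))"
      by (rule continuous_on_compose2[OF Suc.prems(1)[of 0]]) (auto intro!: continuous_intros)
  next
    fix p assume p: "p \<in> {0..1/2::real} \<times> T"
    show "f 0 (2 * fst p, snd p) = G p"
    proof (cases "fst p < 1/2")
      case True
      then show ?thesis using p slot_loc_low[of "fst p"] by (auto simp: G_def)
    next
      case False
      then have fp: "fst p = 1/2" using p by auto
      have "slot (1/2) = 1" by (rule slot_eq) auto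
      then have "loc (1/2) = 0" by (simp add: loc_def)
      have "G p = f (slot (1/2)) (loc (1/2), snd p)" unfolding G_def fp ..
      then have "G p = f 1 (0, snd p)" using \<open>slot (1/2) = 1\<close> \<open>loc (1/2) = 0\<close>
        by simp
      moreover have "2 * fst p = 1" using fp by simp
      then have "f 0 (2 * fst p, snd p) = f 0 (1, snd p)" by simp
      ultimately show ?thesis using Suc.prems(2)[of "snd p" 0] p by auto
    qed
  qed
  have IH: "continuous_on ({0..1 - (1/2)^N} \<times> T) (\<lambda>p. f (Suc (slot (fst p))) (loc (fst p), snd p))"
    using Suc.IH[of "\<lambda>m. f (Suc m)"] Suc.prems by auto
  have c2: "continuous_on ({1/2..1 - (1/2)^(Suc N)} \<times> T) G"
  proof (rule continuous_on_eq)
    show "continuous_on ({1/2..1 - (1/2)^(Suc N)} \<times> T)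
        (\<lambda>p. f (Suc (slot (2 * fst p - 1))) (loc (2 * fst p - 1), snd p))"
      by (rule continuous_on_compose2[OF IH, where f = "\<lambda>p. (2 * fst p - 1, snd p)", simplified])
        (auto intro!: continuous_intros)
  next
    fix p assume p: "p \<in> {1/2..1 - (1/2::real)^(Suc N)} \<times> T"
    have "fst p \<le> 1 - (1/2)^(Suc N)" using p by auto
    moreover have "(0::real) < (1/2)^(Suc N)" by simp
    ultimately have "fst p < 1" by linarith
    then show "f (Suc (slot (2 * fst p - 1))) (loc (2 * fst p - 1), snd p) = G p"
      using p slot_loc_high[of "fst p"] by (auto simp: G_def)
  qed
  have "{0..1 - (1/2::real)^(Suc N)} = {0..1/2} \<union> {1/2..1 - (1/2)^(Suc N)}"
  proof -
    have "(1/2::real)^(Suc N) \<le> 1/2" using half_pow_mono[of 1 "Suc N"] by simp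
    then show ?thesis by auto
  qed
  then have "{0..1 - (1/2::real)^(Suc N)} \<times> T = ({0..1/2} \<times> T) \<union> ({1/2..1 - (1/2)^(Suc N)} \<times> T)"
    by auto
  then show ?case
    using continuous_on_closed_Un[OF closed_Times[OF _ T] closed_Times[OF _ T] c1 c2]
    by (simp add: G_def)
qed

lemma glue_cont_lt1:
  fixes f :: "nat \<Rightarrow> real \<times> 'b::{first_countable_topology,t2_space} \<Rightarrow> 'c::topological_space"
  assumes T: "closed T"
    and cf: "\<And>m. continuous_on ({0..1} \<times> T) (f m)"
    and mt: "\<And>m t. t \<in> T \<Longrightarrow> f m (1,t) = f (Suc m) (0,t)"
    and g: "\<And>p. p \<in> {0..<1} \<times> T \<Longrightarrow> g p = f (slot (fst p)) (loc (fst p), snd p)"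
    and st: "0 \<le> s" "s < 1" "t \<in> T"
  shows "continuous (at (s,t) within ({0..1} \<times> T)) g"
proof -
  obtain N where N: "(1/2::real)^N < 1 - s"
    using real_arch_pow_inv[of "1 - s" "1/2"] st by auto
  define G where "G = (\<lambda>p. f (slot (fst p)) (loc (fst p), snd p))"
  have cG: "continuous_on ({0..1 - (1/2)^N} \<times> T) G"
    unfolding G_def using T cf mt by (rule glue_cont_N)
  have inS: "(s,t) \<in> {0..1 - (1/2)^N} \<times> T" using st N by auto
  show ?thesis
  proof (rule continuous_within_sequentiallyI)
    fix u :: "nat \<Rightarrow> real \<times> 'b"
    assume u: "u \<longlonglongrightarrow> (s,t)" "\<forall>n. u n \<in> {0..1} \<times> T"
    have "((\<lambda>n. fst (u n)) \<longlongrightarrow> s) sequentially"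
      using tendsto_fst[OF u(1)] by simp
    then have ev: "\<forall>\<^sub>F n in sequentially. fst (u n) < 1 - (1/2)^N"
      using N by (intro order_tendstoD) auto
    have ev2: "\<forall>\<^sub>F n in sequentially. u n \<in> {0..1 - (1/2)^N} \<times> T"
      using ev by eventually_elim (use u(2) in \<open>auto simp: mem_Times_iff less_eq_real_def\<close>)
    have "continuous (at (s,t) within ({0..1 - (1/2)^N} \<times> T)) G"
      using cG inS by (simp add: continuous_on_eq_continuous_within)
    then have "((\<lambda>n. G (u n)) \<longlongrightarrow> G (s,t)) sequentially"
      using continuous_within_tendsto_compose[OF _ ev2 u(1)] by blast
    moreover have "\<forall>\<^sub>F n in sequentially. G (u n) = g (u n)"
      using ev
    proof eventually_elim
      case (elim n)
      have "(0::real) < (1/2)^N" by simp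
      then have "fst (u n) < 1" using elim by linarith
      then have "u n \<in> {0..<1} \<times> T" using u(2)[rule_format, of n] by (auto simp: mem_Times_iff)
      then show ?case using g by (simp add: G_def)
    qed
    moreover have "G (s,t) = g (s,t)" using g st by (simp add: G_def)
    ultimately show "((\<lambda>n. g (u n)) \<longlongrightarrow> g (s,t)) sequentially"
      using Lim_transform_eventually by fastforce
  qed
qed

lemma chain_cont:
  fixes \<beta> :: "nat \<Rightarrow> real \<Rightarrow> 'c::topological_space"
  assumes cb: "\<And>n. continuous_on {0..1} (\<beta> n)"
    and mt: "\<And>n. \<beta> n 1 = \<beta> (Suc n) 0"
    and lim: "\<And>U. open U \<Longrightarrow> L \<in> U \<Longrightarrow> \<forall>\<^sub>F n in sequentially. \<beta> n ` {0..1} \<subseteq> U"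
  shows "continuous_on {0..1} (KK L \<beta>)"
  unfolding continuous_on_eq_continuous_within
proof
  fix x :: real assume x: "x \<in> {0..1}"
  show "continuous (at x within {0..1}) (KK L \<beta>)"
  proof (cases "x < 1")
    case True
    define f where "f = (\<lambda>m (p::real \<times> real). \<beta> m (fst p))"
    have "continuous (at (x,0) within ({0..1} \<times> {0::real})) (\<lambda>p. KK L \<beta> (fst p))"
    proof (rule glue_cont_lt1[where f = f])
      show "\<And>m. continuous_on ({0..1} \<times> {0::real}) (f m)"
        unfolding f_def by (rule continuous_on_compose2[OF cb]) (auto intro!: continuous_intros)
    qed (use True x mt in \<open>auto simp: f_def KK_def\<close>)
    then have c2: "continuous (at (x,0) within ((\<lambda>t. (t, 0::real)) ` {0..1})) (\<lambda>p. KK L \<beta> (fst p))"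
      by (rule continuous_within_subset) auto
    have "continuous (at x within {0..1}) ((\<lambda>p. KK L \<beta> (fst p)) \<circ> (\<lambda>t. (t, 0::real)))"
      by (rule continuous_within_compose) (use c2 in \<open>auto intro!: continuous_intros\<close>)
    then show ?thesis by (simp add: o_def)
  next
    case False
    then have x1: "x = 1" using x by auto
    show ?thesis
      unfolding continuous_within_topological
    proof (intro allI impI)
      fix B assume B: "open B" "KK L \<beta> x \<in> B"
      then have "L \<in> B" using x1 by (simp add: KK_def)
      then obtain M where M: "\<And>n. n \<ge> M \<Longrightarrow> \<beta> n ` {0..1} \<subseteq> B"
        using lim[OF B(1)] unfolding eventually_sequentially by blast
      show "\<exists>A. open A \<and> x \<in> A \<and> (\<forall>y\<in>{0..1}. y \<in> A \<longrightarrow> KK L \<beta> y \<in> B)"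
      proof (intro exI conjI ballI impI)
        show "open {1 - (1/2::real)^M <..}" by simp
        show "x \<in> {1 - (1/2::real)^M <..}" using x1 by simp
        fix y :: real assume y: "y \<in> {0..1}" "y \<in> {1 - (1/2)^M <..}"
        show "KK L \<beta> y \<in> B"
        proof (cases "y < 1")
          case True
          obtain n z where nz: "0 \<le> z" "z < 1" "y = gpt n z" using gpt_rep[of y] y True by auto
          have "n \<ge> M"
          proof (rule ccontr)
            assume "\<not> n \<ge> M"
            then have "gpt n z < gpt M 0" using gpt_less_iff[of z 0 n M] nz by simp
            then show False using y nz by (simp add: gpt_zero)
          qed
          then show ?thesis using M[of n] nz KK_gpt[of z L \<beta> n] by auto
        qed (use \<open>L \<in> B\<close> in \<open>auto simp: KK_def\<close>)
      qed
    qed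
  qed
qed

definition thr :: "(nat \<Rightarrow> 'b::real_normed_vector) \<Rightarrow> 'b \<Rightarrow> real \<Rightarrow> 'b" where
  "thr u a = KK a (\<lambda>n y. (1 - y) *\<^sub>R u n + y *\<^sub>R u (Suc n))"

lemma thr_props:
  fixes u :: "nat \<Rightarrow> 'b::real_normed_vector"
  assumes lim: "u \<longlonglongrightarrow> a" and C: "convex C" "\<And>n. u n \<in> C" "a \<in> C"
  shows "continuous_on {0..1} (thr u a)" "\<And>t. t \<in> {0..1} \<Longrightarrow> thr u a t \<in> C"
    "\<And>n. thr u a (gpt n 0) = u n" "thr u a 1 = a"
proof -
  show "continuous_on {0..1} (thr u a)"
    unfolding thr_def
  proof (rule chain_cont)
    show "\<And>n. continuous_on {0..1} (\<lambda>y. (1 - y) *\<^sub>R u n + y *\<^sub>R u (Suc n))"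
      by (intro continuous_intros)
  next
    fix U assume U: "open U" "a \<in> U"
    then obtain \<epsilon> where \<epsilon>: "\<epsilon> > 0" "ball a \<epsilon> \<subseteq> U" using open_contains_ball by blast
    have ev: "\<forall>\<^sub>F n in sequentially. u n \<in> ball a \<epsilon>"
      using lim \<epsilon>(1) unfolding tendsto_iff by (auto simp: dist_commute)
    then have ev2: "\<forall>\<^sub>F n in sequentially. u (Suc n) \<in> ball a \<epsilon>"
      using eventually_sequentially_Suc[of "\<lambda>n. u n \<in> ball a \<epsilon>"] by blast
    show "\<forall>\<^sub>F n in sequentially. (\<lambda>y. (1 - y) *\<^sub>R u n + y *\<^sub>R u (Suc n)) ` {0..1} \<subseteq> U"
      using ev ev2
    proof eventually_elim
      case (elim n)
      then show ?case using \<epsilon>(2) convexD_alt[OF convex_ball] by fastforce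
    qed
  qed simp
next
  fix t :: real assume t: "t \<in> {0..1}"
  show "thr u a t \<in> C"
  proof (cases "t < 1")
    case True
    obtain n y where "0 \<le> y" "y < 1" "t = gpt n y" using gpt_rep[of t] True t by auto
    then show ?thesis unfolding thr_def using convexD_alt[OF C(1) C(2) C(2)] by (simp add: KK_gpt)
  qed (use C in \<open>simp add: thr_def KK_def\<close>)
next
  fix n show "thr u a (gpt n 0) = u n" unfolding thr_def by (simp add: KK_gpt)
next
  show "thr u a 1 = a" by (simp add: thr_def KK_def)
qed

lemma gpt0_lim: "(\<lambda>n. gpt n 0) \<longlonglongrightarrow> 1"
proof -
  have "(\<lambda>n. 1 - (1/2::real)^n) \<longlonglongrightarrow> 1 - 0"
    by (intro tendsto_intros LIMSEQ_realpow_zero) auto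
  then show ?thesis by (simp add: gpt_zero)
qed

lemma gpt0_in: "gpt n 0 \<in> {0..1}"
  using half_pow_mono[of 0 n] by (simp add: gpt_zero)

lemma sq_prod:
  fixes X Y :: "real \<times> real \<Rightarrow> 'a::topological_space"
  assumes pD: "pre_Delta_monoid mul e"
    and cX: "continuous_on ({0..1} \<times> {0..1}) X"
    and cY: "continuous_on ({0..1} \<times> {0..1}) Y"
  shows "continuous_on ({0..1} \<times> {0..1}) (\<lambda>p. mul (X p) (Y p))"
proof (rule continuous_on_sequentiallyI)
  fix u :: "nat \<Rightarrow> real \<times> real" and a
  assume u: "\<forall>n. u n \<in> {0..1} \<times> {0..1}" "a \<in> {0..1} \<times> {0..1}" "u \<longlonglongrightarrow> a"
  have cQ: "convex ({0..1::real} \<times> {0..1::real})"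
    by (intro convex_Times convex_closed_interval)
  note th = thr_props[OF u(3) cQ u(1)[rule_format] u(2)]
  define \<gamma> where "\<gamma> = thr u a"
  have pX: "path (\<lambda>t. X (\<gamma> t))" unfolding path_def \<gamma>_def
    by (rule continuous_on_compose2[OF cX th(1)]) (use th(2) in blast)
  have pY: "path (\<lambda>t. Y (\<gamma> t))" unfolding path_def \<gamma>_def
    by (rule continuous_on_compose2[OF cY th(1)]) (use th(2) in blast)
  have "path (\<lambda>t. mul (X (\<gamma> t)) (Y (\<gamma> t)))"
    using pD pX pY unfolding pre_Delta_monoid_def by blast
  then have "continuous (at 1 within {0..1}) (\<lambda>t. mul (X (\<gamma> t)) (Y (\<gamma> t)))"
    unfolding path_def continuous_on_eq_continuous_within by simp
  then have "(\<lambda>n. mul (X (\<gamma> (gpt n 0))) (Y (\<gamma> (gpt n 0)))) \<longlonglongrightarrow> mul (X (\<gamma> 1)) (Y (\<gamma> 1))"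
    using continuous_within_tendsto_compose'[OF _ gpt0_in gpt0_lim] by blast
  then show "(\<lambda>n. mul (X (u n)) (Y (u n))) \<longlonglongrightarrow> mul (X a) (Y a)"
    using th(3,4) by (simp add: \<gamma>_def)
qed

definition hpt :: "nat \<Rightarrow> real \<Rightarrow> real" where
  "hpt n y = real n / (real n + 1) + y / ((real n + 1) * (real n + 2))"

definition hk :: "real \<Rightarrow> nat" where
  "hk t = nat \<lfloor>1 / (1 - t)\<rfloor> - 1"

definition hy :: "real \<Rightarrow> real" where
  "hy t = (t - real (hk t) / (real (hk t) + 1)) * ((real (hk t) + 1) * (real (hk t) + 2))"

lemma inf_concat_eq: "inf_concat e \<beta> t = (if t < 1 then \<beta> (hk t) (hy t) else e)"
  unfolding inf_concat_def hk_def hy_def Let_def ..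

lemma hpt_form:
  "hpt n y = (real n * (real n + 2) + y) / ((real n + 1) * (real n + 2))"
proof -
  define N where "N = real n"
  have d: "N + 1 \<noteq> 0" "N + 2 \<noteq> 0" by (simp_all add: N_def add_nonneg_eq_0_iff)
  have "N / (N + 1) = (N * (N + 2)) / ((N + 1) * (N + 2))" using d by simp
  then show ?thesis unfolding hpt_def N_def[symmetric] add_divide_distrib by simp
qed

lemma one_minus_hpt: "1 - hpt n y = (real n + 2 - y) / ((real n + 1) * (real n + 2))"
proof -
  define N where "N = real n"
  have N: "N \<ge> 0" by (simp add: N_def)
  define D where "D = (N + 1) * (N + 2)"
  have dd: "D \<noteq> 0" using N by (simp add: D_def)
  have "1 - hpt n y = (D - (N * (N + 2) + y)) / D"
    unfolding hpt_form N_def[symmetric] D_def[symmetric] using dd by (simp add: diff_divide_distrib)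
  moreover have "D - (N * (N + 2) + y) = N + 2 - y" by (simp add: D_def algebra_simps)
  ultimately show ?thesis by (simp add: D_def N_def)
qed

lemma hpt_bounds: "0 \<le> y \<Longrightarrow> y < 1 \<Longrightarrow> 0 \<le> hpt n y \<and> hpt n y < 1"
proof -
  assume y: "0 \<le> y" "y < 1"
  define N where "N = real n"
  have N: "N \<ge> 0" by (simp add: N_def)
  have "hpt n y = (N * (N + 2) + y) / ((N + 1) * (N + 2))"
    unfolding hpt_form N_def ..
  moreover have "N * (N + 2) + y < (N + 1) * (N + 2)" using y N by (simp add: algebra_simps)
  ultimately show ?thesis using y N by (simp add: divide_less_eq)
qed

lemma hk_hpt:
  assumes y: "0 \<le> y" "y < 1"
  shows "hk (hpt n y) = n" "hy (hpt n y) = y"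
proof -
  define N where "N = real n"
  have N: "N \<ge> 0" by (simp add: N_def)
  have "1 - hpt n y = (N + 2 - y) / ((N + 1) * (N + 2))"
    unfolding one_minus_hpt N_def ..
  then have q: "1 / (1 - hpt n y) = ((N + 1) * (N + 2)) / (N + 2 - y)"
    by simp
  have pos: "N + 2 - y > 0" using y N by simp
  have l: "N + 1 \<le> ((N + 1) * (N + 2)) / (N + 2 - y)"
    using pos y N by (simp add: le_divide_eq algebra_simps mult_left_mono)
  have "y * (N + 2) < 1 * (N + 2)" by (rule mult_strict_right_mono) (use y N in auto)
  then have "(N + 1) * (N + 2) < (N + 2) * (N + 2 - y)" by (simp add: algebra_simps)
  then have r: "((N + 1) * (N + 2)) / (N + 2 - y) < N + 2"
    using pos by (simp add: divide_less_eq)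
  have "\<lfloor>1 / (1 - hpt n y)\<rfloor> = int n + 1"
    unfolding q by (rule floor_unique) (use l r in \<open>auto simp: N_def\<close>)
  then show hk: "hk (hpt n y) = n" unfolding hk_def by simp
  have "hy (hpt n y) = (hpt n y - N / (N + 1)) * ((N + 1) * (N + 2))"
    unfolding hy_def hk N_def ..
  moreover have "hpt n y - N / (N + 1) = y / ((N + 1) * (N + 2))"
    by (simp add: hpt_def N_def)
  moreover have "(N + 1) * (N + 2) \<noteq> 0" using N by simp
  ultimately show "hy (hpt n y) = y" by simp
qed

lemma hdec:
  assumes t: "0 \<le> t" "t < 1"
  shows "0 \<le> hy t" "hy t < 1" "hpt (hk t) (hy t) = t"
proof -
  define q where "q = 1 / (1 - t)"
  have q1: "q \<ge> 1" using t by (simp add: q_def)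
  have tq: "t = 1 - 1 / q" using t by (simp add: q_def)
  define K where "K = real (hk t)"
  have K: "K \<ge> 0" by (simp add: K_def)
  have fl: "\<lfloor>q\<rfloor> \<ge> 1" using q1 by simp
  have "nat \<lfloor>q\<rfloor> \<ge> nat 1" using fl by (rule nat_mono)
  then have n1: "nat \<lfloor>q\<rfloor> \<ge> 1" by simp
  have "real (nat \<lfloor>q\<rfloor> - 1) = real (nat \<lfloor>q\<rfloor>) - 1" using n1 by (simp add: of_nat_diff)
  moreover have "real (nat \<lfloor>q\<rfloor>) = of_int \<lfloor>q\<rfloor>" using fl by simp
  ultimately have Kq: "K + 1 = of_int \<lfloor>q\<rfloor>"
    unfolding K_def hk_def q_def[symmetric] by simp
  have b1: "K + 1 \<le> q" using Kq by simp
  have b2: "q < K + 2" using Kq by linarith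
  have hyK: "hy t = (t - K / (K + 1)) * ((K + 1) * (K + 2))" unfolding hy_def K_def ..
  have q0: "q \<noteq> 0" using q1 by simp
  have "1 - K / (K + 1) = 1 / (K + 1)" using K by (simp add: field_simps)
  then have "t - K / (K + 1) = 1 / (K + 1) - 1 / q"
    using tq by linarith
  moreover have "1 / q \<le> 1 / (K + 1)" using b1 K by (simp add: frac_le)
  ultimately show "0 \<le> hy t" using hyK K by simp
  have "1 / (K + 2) < 1 / q" using b2 K q1 by (simp add: frac_less2)
  then have "t - K / (K + 1) < 1 / (K + 1) - 1 / (K + 2)"
    using \<open>t - K / (K + 1) = 1 / (K + 1) - 1 / q\<close> by linarith
  also have "\<dots> = 1 / ((K + 1) * (K + 2))" using K by (simp add: field_simps)
  finally have "t - K / (K + 1) < 1 / ((K + 1) * (K + 2))" .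
  then have "hy t < 1 / ((K + 1) * (K + 2)) * ((K + 1) * (K + 2))"
    unfolding hyK by (rule mult_strict_right_mono) (use K in simp)
  then show "hy t < 1" using K by simp
  have "hpt (hk t) (hy t) = K / (K + 1) + hy t / ((K + 1) * (K + 2))"
    unfolding hpt_def K_def ..
  moreover have "hy t / ((K + 1) * (K + 2)) = t - K / (K + 1)"
    unfolding hyK using K by simp
  ultimately show "hpt (hk t) (hy t) = t" by simp
qed

definition psi :: "real \<Rightarrow> real" where
  "psi = KK 1 hpt"

definition rho :: "real \<Rightarrow> real" where
  "rho t = (if t < 1 then gpt (hk t) (hy t) else 1)"

lemma psi_gpt: "0 \<le> y \<Longrightarrow> y < 1 \<Longrightarrow> psi (gpt n y) = hpt n y"
  by (simp add: psi_def KK_gpt)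

lemma psi_1: "psi 1 = 1" by (simp add: psi_def KK_def)

lemma psi_cont: "continuous_on {0..1} psi"
  unfolding psi_def
proof (rule chain_cont)
  fix n
  have "hpt n = (\<lambda>y. real n / (real n + 1) + y * (1 / ((real n + 1) * (real n + 2))))"
    by (rule ext) (simp add: hpt_def)
  then show "continuous_on {0..1} (hpt n)" by (simp add: continuous_intros)
next
  fix n
  define N where "N = real n"
  have d: "N + 1 \<noteq> 0" "N + 2 \<noteq> 0" "N + 3 \<noteq> 0" by (simp_all add: N_def add_nonneg_eq_0_iff)
  have "hpt n 1 = ((N + 1) * (N + 1)) / ((N + 2) * (N + 1))"
    unfolding hpt_form N_def[symmetric] by (simp add: algebra_simps)
  also have "\<dots> = (N + 1) / (N + 2)" using d by simp
  finally have 1: "hpt n 1 = (N + 1) / (N + 2)" .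
  have "hpt (Suc n) 0 = ((N + 1) * (N + 3)) / ((N + 2) * (N + 3))"
    unfolding hpt_form N_def[symmetric] by (simp add: algebra_simps N_def)
  also have "\<dots> = (N + 1) / (N + 2)" using d by simp
  finally show "hpt n 1 = hpt (Suc n) 0" using 1 by simp
next
  fix U :: "real set" assume U: "open U" "1 \<in> U"
  then obtain \<epsilon> where \<epsilon>: "\<epsilon> > 0" "ball 1 \<epsilon> \<subseteq> U" using open_contains_ball by blast
  obtain M :: nat where M: "1 / \<epsilon> < M" using reals_Archimedean2 by blast
  show "\<forall>\<^sub>F n in sequentially. hpt n ` {0..1} \<subseteq> U"
    unfolding eventually_sequentially
  proof (intro exI allI impI subsetI)
    fix n x assume n: "M \<le> n" and x: "x \<in> hpt n ` {0..1}"
    then obtain y where y: "0 \<le> y" "y \<le> 1" "x = hpt n y" by auto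
    define N where "N = real n"
    have N: "N \<ge> real M" using n by (simp add: N_def)
    have "x = (N * (N + 2) + y) / ((N + 1) * (N + 2))"
      unfolding y hpt_form N_def ..
    have "1 - x = (N + 2 - y) / ((N + 1) * (N + 2))"
      unfolding y one_minus_hpt N_def ..
    moreover have "(N + 2 - y) / ((N + 1) * (N + 2)) \<le> 1 / (N + 1)"
    proof -
      have N0: "N \<ge> 0" by (simp add: N_def)
      have "(N + 2 - y) / ((N + 1) * (N + 2)) \<le> (N + 2) / ((N + 1) * (N + 2))"
        by (rule divide_right_mono) (use y N0 in auto)
      also have "\<dots> = 1 / (N + 1)" using N0 by simp
      finally show ?thesis .
    qed
    moreover have "0 \<le> (N + 2 - y) / ((N + 1) * (N + 2))" using y N by simp
    moreover have "1 / (N + 1) < \<epsilon>"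
    proof -
      have "1 / \<epsilon> < N + 1" using M N by simp
      moreover have "N + 1 > 0" using N by simp
      ultimately show ?thesis using \<epsilon>(1) by (simp add: divide_less_eq field_simps)
    qed
    ultimately have "\<bar>1 - x\<bar> < \<epsilon>" by (simp only: abs_if) auto
    then have "dist 1 x < \<epsilon>" by (simp add: dist_real_def)
    then show "x \<in> U" using \<epsilon>(2) by auto
  qed
qed

lemma psi_range:
  assumes "x \<in> {0..1}" shows "psi x \<in> {0..1}"
proof -
  have x: "0 \<le> x" "x \<le> 1" using assms by auto
  show ?thesis
  proof (cases rule: gpt_cases[OF x])
    case 1 then show ?thesis by (simp add: psi_1)
  next
    case (2 n y)
    then show ?thesis using hpt_bounds[of y n] psi_gpt[of y n] by simp
  qed
qed

lemma rho_psi: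
  assumes "x \<in> {0..1}" shows "rho (psi x) = x"
proof -
  have x: "0 \<le> x" "x \<le> 1" using assms by auto
  show ?thesis
  proof (cases rule: gpt_cases[OF x])
    case 1 then show ?thesis by (simp add: psi_1 rho_def)
  next
    case (2 n y)
    then show ?thesis using hpt_bounds[of y n] hk_hpt[of y n] psi_gpt[of y n]
      by (simp add: rho_def)
  qed
qed

lemma rho_range: "t \<in> {0..1} \<Longrightarrow> rho t \<in> {0..1}"
  using hdec[of t] gpt_bounds[of "hy t" "hk t"] gpt_less_1[of "hy t" "hk t"]
  by (auto simp: rho_def) (smt (verit) half_pow_mono le0 power_0)

lemma psi_rho: "t \<in> {0..1} \<Longrightarrow> psi (rho t) = t"
  using hdec[of t] by (auto simp: rho_def psi_1 psi_gpt)

lemma rho_cont: "continuous_on {0..1} rho"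
proof -
  have "continuous_on (psi ` {0..1}) rho"
    by (rule continuous_on_inv[OF psi_cont]) (auto simp: rho_psi)
  moreover have "psi ` {0..1} = {0..1}"
    using psi_range psi_rho rho_range by (auto simp: image_iff) (metis atLeastAtMost_iff)
  ultimately show ?thesis by simp
qed

lemma inf_KK: "t \<in> {0..1} \<Longrightarrow> inf_concat e \<beta> t = KK e \<beta> (rho t)"
proof -
  assume t: "t \<in> {0..1}"
  show ?thesis
  proof (cases "t < 1")
    case True
    then show ?thesis using hdec[of t] t KK_gpt[of "hy t" e \<beta> "hk t"] by (simp add: inf_concat_eq rho_def)
  next
    case False
    then show ?thesis by (simp add: inf_concat_eq rho_def KK_def)
  qed
qed

lemma KK_inf: "x \<in> {0..1} \<Longrightarrow> KK e \<beta> x = inf_concat e \<beta> (psi x)"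
  using inf_KK[of "psi x" e \<beta>] psi_range rho_psi by simp

lemma rho_01: "rho 0 = 0" "rho 1 = 1"
proof -
  have "psi 0 = 0" using psi_gpt[of 0 0] by (simp add: gpt_def hpt_def)
  then show "rho 0 = 0" using rho_psi[of 0] by simp
  show "rho 1 = 1" by (simp add: rho_def)
qed

lemma KK_inf_homotopic:
  assumes "path (KK e \<beta>)" "path_image (KK e \<beta>) \<subseteq> S"
  shows "homotopic_paths S (KK e \<beta>) (inf_concat e \<beta>)"
  by (rule homotopic_paths_reparametrize[OF assms rho_cont _ rho_01])
     (use rho_range inf_KK[of _ e \<beta>] in auto)

definition nulls :: "'a::topological_space \<Rightarrow> (nat \<Rightarrow> real \<Rightarrow> 'a) \<Rightarrow> bool" where
  "nulls e \<beta> \<longleftrightarrow> (\<forall>n. continuous_on {0..1} (\<beta> n) \<and> \<beta> n 0 = e \<and> \<beta> n 1 = e) \<and>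
     (\<forall>U. open U \<longrightarrow> e \<in> U \<longrightarrow> (\<forall>\<^sub>F n in sequentially. \<beta> n ` {0..1} \<subseteq> U))"

lemma null_sequence_nulls:
  assumes "null_sequence e \<alpha>" shows "nulls e \<alpha>"
proof -
  have 1: "continuous_on {0..1} (\<alpha> n) \<and> \<alpha> n 0 = e \<and> \<alpha> n 1 = e" for n
    using assms unfolding null_sequence_def loop_at_def path_def pathstart_def pathfinish_def
    by simp
  have 2: "\<forall>\<^sub>F n in sequentially. \<alpha> n ` {0..1} \<subseteq> U" if "open U" "e \<in> U" for U
    using assms that unfolding null_sequence_def path_image_def by simp
  show ?thesis unfolding nulls_def using 1 2 by simp
qed

lemma KK_cont: "nulls e \<beta> \<Longrightarrow> continuous_on {0..1} (KK e \<beta>)"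
  unfolding nulls_def by (rule chain_cont) auto

lemma KK_start: "nulls e \<beta> \<Longrightarrow> KK e \<beta> (gpt n 0) = e"
  using KK_gpt[of 0 e \<beta> n] unfolding nulls_def by simp

lemma KK_0: "nulls e \<beta> \<Longrightarrow> KK e \<beta> 0 = e"
  using KK_start[of e \<beta> 0] by (simp add: gpt_zero)

lemma KK_1: "KK e \<beta> 1 = e"
  by (simp add: KK_def)


lemma KK_val:
  assumes "x \<in> {0..1}"
  shows "KK e \<beta> x = e \<or> (\<exists>n y. 0 \<le> y \<and> y < 1 \<and> x = gpt n y \<and> KK e \<beta> x = \<beta> n y)"
proof -
  have x: "0 \<le> x" "x \<le> 1" using assms by auto
  show ?thesis
  proof (cases rule: gpt_cases[OF x])
    case 1 then show ?thesis by (simp add: KK_1)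
  next
    case (2 n y) then show ?thesis
      by (intro disjI2 exI[of _ n] exI[of _ y]) (simp add: KK_gpt)
  qed
qed

lemma nulls_inj:
  assumes "nulls e \<beta>" "inj g"
  shows "nulls e (\<lambda>n. \<beta> (g n))"
proof -
  have "\<forall>\<^sub>F n in sequentially. \<beta> (g n) ` {0..1} \<subseteq> U" if U: "open U" "e \<in> U" for U
  proof -
    have "\<forall>\<^sub>F n in sequentially. \<beta> n ` {0..1} \<subseteq> U" using assms(1) U by (simp add: nulls_def)
    then have "finite {n. \<not> \<beta> n ` {0..1} \<subseteq> U}"
      by (simp add: cofinite_eq_sequentially[symmetric] eventually_cofinite)
    then have "finite (g -` {n. \<not> \<beta> n ` {0..1} \<subseteq> U})"
      using assms(2) by (rule finite_vimageI)
    then show ?thesis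
      by (simp add: cofinite_eq_sequentially[symmetric] eventually_cofinite vimage_def)
  qed
  moreover have "continuous_on {0..1} (\<beta> (g n)) \<and> \<beta> (g n) 0 = e \<and> \<beta> (g n) 1 = e" for n
    using assms(1) unfolding nulls_def by simp
  ultimately show ?thesis unfolding nulls_def by simp
qed

lemma nulls_ev:
  assumes "nulls e \<beta>"
    and loops: "\<And>n. continuous_on {0..1} (\<beta>' n) \<and> \<beta>' n 0 = e \<and> \<beta>' n 1 = e"
    and ev: "\<forall>\<^sub>F j in sequentially. \<beta>' j = \<beta> (j + k) \<or> \<beta>' j = (\<lambda>_. e)"
  shows "nulls e \<beta>'"
proof -
  have "\<forall>\<^sub>F j in sequentially. \<beta>' j ` {0..1} \<subseteq> U" if U: "open U" "e \<in> U" for U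
  proof -
    have "\<forall>\<^sub>F n in sequentially. \<beta> n ` {0..1} \<subseteq> U" using assms(1) U by (simp add: nulls_def)
    then have "\<forall>\<^sub>F j in sequentially. \<beta> (j + k) ` {0..1} \<subseteq> U"
      using eventually_sequentially_seg[of "\<lambda>n. \<beta> n ` {0..1} \<subseteq> U" k] by simp
    with ev show ?thesis
      by eventually_elim (use U in auto)
  qed
  then show ?thesis using loops unfolding nulls_def by simp
qed

definition cyc :: "nat \<Rightarrow> nat \<Rightarrow> nat \<Rightarrow> nat" where
  "cyc m r j = (if j < m then j else if j = m then r else if j \<le> r then j - 1 else j)"

definition icyc :: "nat \<Rightarrow> nat \<Rightarrow> nat \<Rightarrow> nat" where
  "icyc m r i = (if i < m then i else if i < r then i + 1 else if i = r then m else i)"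

lemma bij_cyc: "m \<le> r \<Longrightarrow> bij (cyc m r)"
proof (rule o_bij[of "icyc m r"])
  assume "m \<le> r"
  show "icyc m r \<circ> cyc m r = id"
    using \<open>m \<le> r\<close> by (auto simp: fun_eq_iff cyc_def icyc_def)
  show "cyc m r \<circ> icyc m r = id"
    using \<open>m \<le> r\<close> by (auto simp: fun_eq_iff cyc_def icyc_def)
qed

primrec sig :: "(nat \<Rightarrow> nat) \<Rightarrow> nat \<Rightarrow> nat \<Rightarrow> nat" where
  "sig \<phi> 0 = id"
| "sig \<phi> (Suc m) = sig \<phi> m \<circ> cyc m (inv (sig \<phi> m) (\<phi> m))"

declare sig.simps(2)[simp del]

definition rr :: "(nat \<Rightarrow> nat) \<Rightarrow> nat \<Rightarrow> nat" where
  "rr \<phi> m = inv (sig \<phi> m) (\<phi> m)"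

lemma sig_props:
  assumes "bij \<phi>"
  shows "bij (sig \<phi> m) \<and> (\<forall>j<m. sig \<phi> m j = \<phi> j) \<and> sig \<phi> m (rr \<phi> m) = \<phi> m \<and> m \<le> rr \<phi> m"
proof (induction m)
  have "bij (sig \<phi> 0)" by simp
  moreover have "sig \<phi> 0 (rr \<phi> 0) = \<phi> 0" by (simp add: rr_def)
  ultimately show "bij (sig \<phi> 0) \<and> (\<forall>j<0. sig \<phi> 0 j = \<phi> j) \<and> sig \<phi> 0 (rr \<phi> 0) = \<phi> 0 \<and> 0 \<le> rr \<phi> 0"
    by simp
next
  case (Suc m)
  define r where "r = rr \<phi> m"
  have b: "bij (sig \<phi> m)" and pre: "\<forall>j<m. sig \<phi> m j = \<phi> j" and sr: "sig \<phi> m r = \<phi> m"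
    and mr: "m \<le> r" using Suc.IH by (auto simp: r_def)
  have eq: "sig \<phi> (Suc m) = sig \<phi> m \<circ> cyc m r" by (simp add: r_def rr_def sig.simps(2))
  have b2: "bij (sig \<phi> (Suc m))" unfolding eq using b bij_cyc[OF mr] by (rule bij_comp[rotated])
  have pre2: "\<forall>j<Suc m. sig \<phi> (Suc m) j = \<phi> j"
  proof (intro allI impI)
    fix j assume "j < Suc m"
    then show "sig \<phi> (Suc m) j = \<phi> j"
    proof (cases "j < m")
      case True then show ?thesis by (simp add: eq cyc_def pre)
    next
      case False then have "j = m" using \<open>j < Suc m\<close> by simp
      then show ?thesis by (simp add: eq cyc_def sr)
    qed
  qed
  define r' where "r' = rr \<phi> (Suc m)"
  have sr2: "sig \<phi> (Suc m) r' = \<phi> (Suc m)"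
    unfolding r'_def rr_def using b2 by (simp add: bij_is_surj surj_f_inv_f)
  have "Suc m \<le> r'"
  proof (rule ccontr)
    assume "\<not> Suc m \<le> r'"
    then have "r' < Suc m" by simp
    then have "\<phi> r' = \<phi> (Suc m)" using pre2 sr2 by auto
    then have "r' = Suc m" using assms by (simp add: bij_is_inj inj_eq)
    with \<open>r' < Suc m\<close> show False by simp
  qed
  then show ?case using b2 pre2 sr2 unfolding r'_def by blast
qed

lemma sig_Suc:
  "sig \<phi> (Suc m) j = (if j < m then sig \<phi> m j else if j = m then sig \<phi> m (rr \<phi> m)
      else if j \<le> rr \<phi> m then sig \<phi> m (j - 1) else sig \<phi> m j)"
proof -
  have "sig \<phi> (Suc m) j = sig \<phi> m (cyc m (rr \<phi> m) j)"
    unfolding sig.simps(2) rr_def by simp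
  then show ?thesis unfolding cyc_def by simp
qed

lemma sig_tail:
  assumes "bij \<phi>"
  shows "\<exists>M. \<forall>m\<ge>M. \<forall>j\<ge>m. N \<le> sig \<phi> m j"
proof -
  define M where "M = Suc (Max (inv \<phi> ` {..<N}))"
  have M: "\<And>i. i < N \<Longrightarrow> inv \<phi> i < M"
    unfolding M_def by (intro le_imp_less_Suc Max_ge) auto
  show ?thesis
  proof (intro exI allI impI)
    fix m j assume m: "M \<le> m" and j: "m \<le> j"
    show "N \<le> sig \<phi> m j"
    proof (rule ccontr)
      assume "\<not> N \<le> sig \<phi> m j"
      then have lt: "sig \<phi> m j < N" by simp
      define i where "i = inv \<phi> (sig \<phi> m j)"
      have "i < m" using M[OF lt] m by (simp add: i_def)
      have "\<phi> i = sig \<phi> m j" unfolding i_def using assms by (simp add: bij_is_surj surj_f_inv_f)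
      moreover have "sig \<phi> m i = \<phi> i" using sig_props[OF assms, of m] \<open>i < m\<close> by blast
      ultimately have "sig \<phi> m i = sig \<phi> m j" by simp
      then have "i = j" using sig_props[OF assms, of m] by (metis bij_is_inj injD)
      with \<open>i < m\<close> j show False by simp
    qed
  qed
qed

definition w0 :: "nat \<Rightarrow> nat \<Rightarrow> real \<Rightarrow> real" where
  "w0 m r t = max (min t (1 - (1/2)^m)) (1 - 2^(r - m) * (1 - t))"

definition w1 :: "nat \<Rightarrow> nat \<Rightarrow> real \<Rightarrow> real" where
  "w1 m r t = max (min t (1 - (1/2)^(Suc m))) (1 - 2^(r - m) * (1 - t))"

definition z1 :: "real \<Rightarrow> real" where
  "z1 t = max 0 (2 * t - 1)"

lemma one_minus_gpt: "1 - gpt n y = (1/2)^(Suc n) * (2 - y)"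
  by (simp add: gpt_def algebra_simps)

lemma cbound:
  assumes "Suc n \<le> k + j" "y < 1"
  shows "1 - 2^k * (1 - gpt n y) \<le> 1 - (1/2)^j"
proof -
  have "(1/2::real)^(k + j) \<le> (1/2)^(Suc n)" using assms(1) by (rule half_pow_mono)
  then have "(2::real)^k * (1/2)^(k + j) \<le> 2^k * (1/2)^(Suc n)" by simp
  moreover have "(2::real)^k * (1/2)^(k + j) = (1/2)^j"
    by (simp add: power_add power_mult_distrib[symmetric])
  moreover have "(1/2::real)^(Suc n) \<le> (1/2)^(Suc n) * (2 - y)"
    using assms(2) by (simp add: mult_le_cancel_left1)
  ultimately have "(1/2)^j \<le> 2^k * ((1/2::real)^(Suc n) * (2 - y))"
    by (smt (verit) mult_left_mono zero_le_power)
  then show ?thesis unfolding one_minus_gpt by simp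
qed

lemma cbound2:
  assumes "t \<le> 1" "1 \<le> (c::real)"
  shows "1 - c * (1 - t) \<le> t"
proof -
  have "1 * (1 - t) \<le> c * (1 - t)" using assms by (intro mult_right_mono) auto
  then show ?thesis by simp
qed

lemma pow2_ge1: "1 \<le> (2::real)^k" by simp

lemma gpt_nonneg: "0 \<le> y \<Longrightarrow> y < 1 \<Longrightarrow> 0 \<le> gpt n y"
  using gpt_bounds(1)[of y n] half_pow_mono[of 0 n] by simp

lemma gpt_mono_n:
  assumes "n \<le> m" "0 \<le> y'" "y' < 1"
  shows "gpt n 0 \<le> gpt m y'"
proof (cases "n = m")
  case True then show ?thesis using assms by (simp add: gpt_def)
next
  case False then have "n < m" using assms by simp
  then show ?thesis using gpt_less_iff[of 0 y' n m] assms by simp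
qed

lemma w0_eval:
  assumes mr: "m \<le> r" and y: "0 \<le> y" "y < 1"
  shows "w0 m r (gpt n y) = (if n < m then gpt n y else if n < r then gpt m 0 else gpt (n - (r - m)) y)"
proof -
  have t1: "gpt n y \<le> 1" using gpt_less_1[OF y, of n] by simp
  show ?thesis
  proof (cases "n < m")
    case True
    have "gpt n y < gpt m 0" using True gpt_less_iff[of y 0 n m] y by simp
    then have "min (gpt n y) (1 - (1/2)^m) = gpt n y" by (simp add: gpt_zero)
    moreover have "1 - 2^(r - m) * (1 - gpt n y) \<le> gpt n y" by (rule cbound2[OF t1 pow2_ge1])
    ultimately show ?thesis using True by (simp add: w0_def)
  next
    case False
    then have "gpt m 0 \<le> gpt n y" using gpt_mono_n[of m n y] y by simp
    then have mn: "min (gpt n y) (1 - (1/2)^m) = gpt m 0" by (simp add: gpt_zero)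
    show ?thesis
    proof (cases "n < r")
      case True
      have "1 - 2^(r - m) * (1 - gpt n y) \<le> 1 - (1/2)^m"
        by (rule cbound) (use True mr y in auto)
      then show ?thesis using mn True False by (simp add: w0_def gpt_zero)
    next
      case nr: False
      have sh: "1 - 2^(r - m) * (1 - gpt n y) = gpt (n - (r - m)) y"
        by (rule gpt_shift) (use nr mr in auto)
      have "gpt m 0 \<le> gpt (n - (r - m)) y" using gpt_mono_n[of m "n - (r - m)" y] y nr mr by simp
      then show ?thesis using mn sh nr False by (simp add: w0_def)
    qed
  qed
qed

lemma w1_eval:
  assumes mr: "m \<le> r" and y: "0 \<le> y" "y < 1"
  shows "w1 m r (gpt n y) = (if n \<le> m then gpt n y else if n \<le> r then gpt (Suc m) 0 else gpt (n - (r - m)) y)"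
proof -
  have t1: "gpt n y \<le> 1" using gpt_less_1[OF y, of n] by simp
  show ?thesis
  proof (cases "n \<le> m")
    case True
    have "gpt n y < gpt (Suc m) 0" using True gpt_less_iff[of y 0 n "Suc m"] y by simp
    then have "min (gpt n y) (1 - (1/2)^(Suc m)) = gpt n y" by (simp add: gpt_zero)
    moreover have "1 - 2^(r - m) * (1 - gpt n y) \<le> gpt n y" by (rule cbound2[OF t1 pow2_ge1])
    ultimately show ?thesis using True by (simp add: w1_def)
  next
    case False
    then have "gpt (Suc m) 0 \<le> gpt n y" using gpt_mono_n[of "Suc m" n y] y by simp
    then have mn: "min (gpt n y) (1 - (1/2)^(Suc m)) = gpt (Suc m) 0" by (simp add: gpt_zero)
    show ?thesis
    proof (cases "n \<le> r")
      case True
      have "1 - 2^(r - m) * (1 - gpt n y) \<le> 1 - (1/2)^(Suc m)"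
        by (rule cbound) (use True mr y in auto)
      then show ?thesis using mn True False by (simp add: w1_def gpt_zero)
    next
      case nr: False
      have sh: "1 - 2^(r - m) * (1 - gpt n y) = gpt (n - (r - m)) y"
        by (rule gpt_shift) (use nr mr in auto)
      have "gpt (Suc m) 0 \<le> gpt (n - (r - m)) y"
        using gpt_mono_n[of "Suc m" "n - (r - m)" y] y nr mr by simp
      then show ?thesis using mn sh nr False by (simp add: w1_def)
    qed
  qed
qed

lemma z1_eval:
  assumes y: "0 \<le> y" "y < 1"
  shows "z1 (gpt n y) = (if n = 0 then gpt 0 0 else gpt (n - 1) y)"
proof (cases "n = 0")
  case True then show ?thesis using y by (simp add: z1_def gpt_def)
next
  case False
  have "2 * gpt n y - 1 = gpt (n - 1) y" using gpt_shift[of 1 n y] False by simp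
  moreover have "0 \<le> gpt (n - 1) y" using gpt_nonneg y by blast
  ultimately show ?thesis using False by (simp add: z1_def)
qed

lemma w0_1: "w0 m r 1 = 1" and w1_1: "w1 m r 1 = 1" and z1_1: "z1 1 = 1"
  by (auto simp: w0_def w1_def z1_def)

lemma hp_le1: "(1/2::real)^k \<le> 1"
  using half_pow_mono[of 0 k] by simp

lemma w0_0: "w0 m r 0 = 0" and w1_0: "w1 m r 0 = 0" and z1_0: "z1 0 = 0"
proof -
  have a: "0 \<le> 1 - (1/2::real)^m" "0 \<le> 1 - (1/2::real)^(Suc m)" using hp_le1[of m] hp_le1[of "Suc m"] by simp_all
  have c: "1 - (2::real)^(r - m) \<le> 0" using pow2_ge1[of "r - m"] by simp
  show "w0 m r 0 = 0" using a c unfolding w0_def by simp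
  show "w1 m r 0 = 0" using a c unfolding w1_def by simp
  show "z1 0 = 0" by (simp add: z1_def)
qed

lemma w0_range: "t \<in> {0..1} \<Longrightarrow> w0 m r t \<in> {0..1}"
proof -
  assume t: "t \<in> {0..1}"
  have a: "0 \<le> 1 - (1/2::real)^m" using hp_le1[of m] by simp
  have c: "0 \<le> (2::real)^(r - m) * (1 - t)" using t by simp
  show ?thesis using a c t unfolding w0_def by auto
qed

lemma w1_range: "t \<in> {0..1} \<Longrightarrow> w1 m r t \<in> {0..1}"
proof -
  assume t: "t \<in> {0..1}"
  have a: "0 \<le> 1 - (1/2::real)^(Suc m)" using hp_le1[of "Suc m"] by simp
  have c: "0 \<le> (2::real)^(r - m) * (1 - t)" using t by simp
  show ?thesis using a c t unfolding w1_def by auto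
qed

lemma z1_range: "t \<in> {0..1} \<Longrightarrow> z1 t \<in> {0..1}"
  by (auto simp: z1_def)

definition gam :: "(nat \<Rightarrow> real \<Rightarrow> 'a) \<Rightarrow> (nat \<Rightarrow> nat) \<Rightarrow> nat \<Rightarrow> nat \<Rightarrow> real \<Rightarrow> 'a" where
  "gam \<alpha> \<phi> m j = (if j < m then \<alpha> (sig \<phi> m j) else \<alpha> (sig \<phi> m (j + (rr \<phi> m - m))))"

definition del :: "'a \<Rightarrow> (nat \<Rightarrow> real \<Rightarrow> 'a) \<Rightarrow> (nat \<Rightarrow> nat) \<Rightarrow> nat \<Rightarrow> nat \<Rightarrow> real \<Rightarrow> 'a" where
  "del e \<alpha> \<phi> m j = (if m \<le> j \<and> j < rr \<phi> m then \<alpha> (sig \<phi> m j) else (\<lambda>_. e))"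

definition Hm :: "('a \<Rightarrow> 'a \<Rightarrow> 'a) \<Rightarrow> 'a \<Rightarrow> (nat \<Rightarrow> real \<Rightarrow> 'a) \<Rightarrow> (nat \<Rightarrow> nat) \<Rightarrow> nat \<Rightarrow> real \<times> real \<Rightarrow> 'a" where
  "Hm mul e \<alpha> \<phi> m p =
     mul (KK e (gam \<alpha> \<phi> m) ((1 - fst p) * w0 m (rr \<phi> m) (snd p) + fst p * w1 m (rr \<phi> m) (snd p)))
         (KK e (del e \<alpha> \<phi> m) ((1 - fst p) * snd p + fst p * z1 (snd p)))"

lemma pD_id: "pre_Delta_monoid mul e \<Longrightarrow> mul e x = x \<and> mul x e = x"
  unfolding pre_Delta_monoid_def by blast

lemma nulls_loop: "nulls e \<beta> \<Longrightarrow> continuous_on {0..1} (\<beta> n) \<and> \<beta> n 0 = e \<and> \<beta> n 1 = e"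
  unfolding nulls_def by blast

lemma nulls_sig: "nulls e \<alpha> \<Longrightarrow> bij \<phi> \<Longrightarrow> nulls e (\<lambda>j. \<alpha> (sig \<phi> m j))"
  using nulls_inj sig_props bij_is_inj by blast

lemma nulls_gam:
  assumes "nulls e \<alpha>" "bij \<phi>"
  shows "nulls e (gam \<alpha> \<phi> m)"
proof (rule nulls_ev[OF nulls_sig[OF assms, of m], where k = "rr \<phi> m - m"])
  fix n show "continuous_on {0..1} (gam \<alpha> \<phi> m n) \<and> gam \<alpha> \<phi> m n 0 = e \<and> gam \<alpha> \<phi> m n 1 = e"
    using nulls_loop[OF assms(1)] by (simp add: gam_def)
next
  show "\<forall>\<^sub>F j in sequentially. gam \<alpha> \<phi> m j = \<alpha> (sig \<phi> m (j + (rr \<phi> m - m))) \<or> gam \<alpha> \<phi> m j = (\<lambda>_. e)"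
    unfolding eventually_sequentially by (rule exI[of _ m]) (simp add: gam_def)
qed

lemma nulls_del:
  assumes "nulls e \<alpha>" "bij \<phi>"
  shows "nulls e (del e \<alpha> \<phi> m)"
proof (rule nulls_ev[OF nulls_sig[OF assms, of m], where k = 0])
  fix n show "continuous_on {0..1} (del e \<alpha> \<phi> m n) \<and> del e \<alpha> \<phi> m n 0 = e \<and> del e \<alpha> \<phi> m n 1 = e"
    using nulls_loop[OF assms(1)] by (simp add: del_def)
next
  show "\<forall>\<^sub>F j in sequentially. del e \<alpha> \<phi> m j = \<alpha> (sig \<phi> m (j + 0)) \<or> del e \<alpha> \<phi> m j = (\<lambda>_. e)"
    unfolding eventually_sequentially by (rule exI[of _ "rr \<phi> m"]) (simp add: del_def)
qed

context
  fixes mul :: "'a::topological_space \<Rightarrow> 'a \<Rightarrow> 'a" and e :: 'a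
    and \<alpha> :: "nat \<Rightarrow> real \<Rightarrow> 'a" and \<phi> :: "nat \<Rightarrow> nat"
  assumes pD: "pre_Delta_monoid mul e" and nA: "nulls e \<alpha>" and bp: "bij \<phi>"
begin

lemma mr: "m \<le> rr \<phi> m" using sig_props[OF bp] by blast

lemma mul_e: "mul e x = x" "mul x e = x" using pD_id[OF pD] by auto

lemma P0:
  assumes t: "t \<in> {0..1}"
  shows "Hm mul e \<alpha> \<phi> m (0, t) = KK e (\<lambda>j. \<alpha> (sig \<phi> m j)) t"
proof -
  define r where "r = rr \<phi> m"
  have mr': "m \<le> r" using mr by (simp add: r_def)
  have H: "Hm mul e \<alpha> \<phi> m (0, t) = mul (KK e (gam \<alpha> \<phi> m) (w0 m r t)) (KK e (del e \<alpha> \<phi> m) t)"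
    by (simp add: Hm_def r_def)
  have t2: "0 \<le> t" "t \<le> 1" using t by auto
  show ?thesis
  proof (cases rule: gpt_cases[OF t2])
    case 1 then show ?thesis using H by (simp add: w0_1 KK_1 mul_e)
  next
    case (2 n y)
    note y = 2(1,2)
    have w: "w0 m r t = (if n < m then gpt n y else if n < r then gpt m 0 else gpt (n - (r - m)) y)"
      using w0_eval[OF mr' y] 2(3) by simp
    have D: "KK e (del e \<alpha> \<phi> m) t = (if m \<le> n \<and> n < r then \<alpha> (sig \<phi> m n) y else e)"
      using 2(3) KK_gpt[OF y, of e] by (simp add: del_def r_def)
    have R: "KK e (\<lambda>j. \<alpha> (sig \<phi> m j)) t = \<alpha> (sig \<phi> m n) y"
      using 2(3) KK_gpt[OF y, of e] by simp
    show ?thesis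
    proof (cases "n < m")
      case True
      then show ?thesis using H w D R KK_gpt[OF y, of e] by (simp add: gam_def mul_e)
    next
      case False
      show ?thesis
      proof (cases "n < r")
        case True
        then show ?thesis using H w D R False KK_start[OF nulls_gam[OF nA bp, of m]] by (simp add: mul_e)
      next
        case nr: False
        have a: "\<not> n - (r - m) < m" "n - (r - m) + (r - m) = n" using nr mr' by auto
        have "gam \<alpha> \<phi> m (n - (r - m)) y = \<alpha> (sig \<phi> m n) y"
          unfolding gam_def r_def[symmetric] using a by simp
        then show ?thesis using H w D R False nr KK_gpt[OF y, of e] by (simp add: mul_e)
      qed
    qed
  qed
qed

lemma P1:
  assumes t: "t \<in> {0..1}"
  shows "Hm mul e \<alpha> \<phi> m (1, t) = KK e (\<lambda>j. \<alpha> (sig \<phi> (Suc m) j)) t"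
proof -
  define r where "r = rr \<phi> m"
  have mr': "m \<le> r" using mr by (simp add: r_def)
  have H: "Hm mul e \<alpha> \<phi> m (1, t) = mul (KK e (gam \<alpha> \<phi> m) (w1 m r t)) (KK e (del e \<alpha> \<phi> m) (z1 t))"
    by (simp add: Hm_def r_def)
  have t2: "0 \<le> t" "t \<le> 1" using t by auto
  show ?thesis
  proof (cases rule: gpt_cases[OF t2])
    case 1 then show ?thesis using H by (simp add: w1_1 z1_1 KK_1 mul_e)
  next
    case (2 n y)
    note y = 2(1,2)
    have w: "w1 m r t = (if n \<le> m then gpt n y else if n \<le> r then gpt (Suc m) 0 else gpt (n - (r - m)) y)"
      using w1_eval[OF mr' y] 2(3) by simp
    have z: "z1 t = (if n = 0 then gpt 0 0 else gpt (n - 1) y)"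
      using z1_eval[OF y] 2(3) by simp
    have D: "KK e (del e \<alpha> \<phi> m) (z1 t) = (if 0 < n \<and> m < n \<and> n \<le> r then \<alpha> (sig \<phi> m (n - 1)) y else e)"
    proof (cases "n = 0")
      case True
      then show ?thesis using z KK_start[OF nulls_del[OF nA bp, of m], of 0] by simp
    next
      case False
      then have "KK e (del e \<alpha> \<phi> m) (z1 t) = del e \<alpha> \<phi> m (n - 1) y"
        using z KK_gpt[OF y, of e] by simp
      then show ?thesis using False by (auto simp: del_def r_def)
    qed
    have R: "KK e (\<lambda>j. \<alpha> (sig \<phi> (Suc m) j)) t = \<alpha> (sig \<phi> (Suc m) n) y"
      using 2(3) KK_gpt[OF y, of e] by simp
    have S: "sig \<phi> (Suc m) n = (if n < m then sig \<phi> m n else if n = m then sig \<phi> m r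
      else if n \<le> r then sig \<phi> m (n - 1) else sig \<phi> m n)"
      unfolding r_def by (rule sig_Suc)
    show ?thesis
    proof (cases "n \<le> m")
      case True
      have "KK e (gam \<alpha> \<phi> m) (w1 m r t) = gam \<alpha> \<phi> m n y" using w True KK_gpt[OF y, of e] by simp
      moreover have "gam \<alpha> \<phi> m n y = \<alpha> (sig \<phi> (Suc m) n) y"
        using True S mr' by (auto simp: gam_def r_def)
      ultimately show ?thesis using H D R True by (simp add: mul_e)
    next
      case False
      show ?thesis
      proof (cases "n \<le> r")
        case True
        have "KK e (gam \<alpha> \<phi> m) (w1 m r t) = e"
          using w True False KK_start[OF nulls_gam[OF nA bp, of m]] by simp
        then show ?thesis using H D R S True False by (simp add: mul_e)
      next
        case nr: False
        have "KK e (gam \<alpha> \<phi> m) (w1 m r t) = gam \<alpha> \<phi> m (n - (r - m)) y"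
          using w nr False KK_gpt[OF y, of e] by simp
        moreover have "gam \<alpha> \<phi> m (n - (r - m)) y = \<alpha> (sig \<phi> m n) y"
        proof -
          have a: "\<not> n - (r - m) < m" "n - (r - m) + (r - m) = n" using nr mr' by auto
          show ?thesis unfolding gam_def r_def[symmetric] using a by simp
        qed
        ultimately show ?thesis using H D R S nr False by (simp add: mul_e)
      qed
    qed
  qed
qed

end


definition Vs :: "'a \<Rightarrow> (nat \<Rightarrow> real \<Rightarrow> 'a) \<Rightarrow> 'a set" where
  "Vs e \<alpha> = insert e {\<alpha> n y |n y. 0 \<le> y \<and> y < 1}"

definition TV :: "'a \<Rightarrow> (nat \<Rightarrow> real \<Rightarrow> 'a) \<Rightarrow> nat \<Rightarrow> 'a set" where
  "TV e \<alpha> N = insert e {\<alpha> k y |k y. 0 \<le> y \<and> y < 1 \<and> N \<le> k}"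

definition wint :: "nat \<Rightarrow> nat \<Rightarrow> real \<times> real \<Rightarrow> real" where
  "wint m r p = (1 - fst p) * w0 m r (snd p) + fst p * w1 m r (snd p)"

definition zint :: "real \<times> real \<Rightarrow> real" where
  "zint p = (1 - fst p) * snd p + fst p * z1 (snd p)"

lemma Hm_alt: "Hm mul e \<alpha> \<phi> m p = mul (KK e (gam \<alpha> \<phi> m) (wint m (rr \<phi> m) p)) (KK e (del e \<alpha> \<phi> m) (zint p))"
  by (simp add: Hm_def wint_def zint_def)

lemma conv_range:
  assumes "a \<in> {0..1}" "b \<in> {0..1}" "s \<in> {0..1::real}"
  shows "(1 - s) * a + s * b \<in> {0..1}"
proof -
  have "(1 - s) * a + s * b \<le> (1 - s) * 1 + s * 1"
    using assms by (intro add_mono mult_left_mono) auto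
  moreover have "0 \<le> (1 - s) * a + s * b" using assms by simp
  ultimately show ?thesis by simp
qed

lemma wint_range:
  assumes "p \<in> {0..1} \<times> {0..1}" shows "wint m r p \<in> {0..1}"
proof -
  have "snd p \<in> {0..1}" "fst p \<in> {0..1}" using assms by auto
  then show ?thesis unfolding wint_def by (intro conv_range w0_range w1_range)
qed

lemma zint_range:
  assumes "p \<in> {0..1} \<times> {0..1}" shows "zint p \<in> {0..1}"
proof -
  have "snd p \<in> {0..1}" "fst p \<in> {0..1}" using assms by auto
  then show ?thesis unfolding zint_def by (intro conv_range z1_range)
qed

lemma wint_cont: "continuous_on S (wint m r)"
  unfolding wint_def w0_def w1_def by (intro continuous_intros)

lemma zint_cont: "continuous_on S zint"
  unfolding zint_def z1_def by (intro continuous_intros)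

context
  fixes mul :: "'a::topological_space \<Rightarrow> 'a \<Rightarrow> 'a" and e :: 'a
    and \<alpha> :: "nat \<Rightarrow> real \<Rightarrow> 'a" and \<phi> :: "nat \<Rightarrow> nat"
  assumes pD: "pre_Delta_monoid mul e" and nA: "nulls e \<alpha>" and bp: "bij \<phi>"
begin

lemma mr2: "m \<le> rr \<phi> m" using sig_props[OF bp] by blast

lemma mul_e2: "mul e x = x" "mul x e = x" using pD_id[OF pD] by auto

lemma Hm_cont: "continuous_on ({0..1} \<times> {0..1}) (Hm mul e \<alpha> \<phi> m)"
proof -
  have X: "continuous_on ({0..1} \<times> {0..1}) (\<lambda>p. KK e (gam \<alpha> \<phi> m) (wint m (rr \<phi> m) p))"
    by (rule continuous_on_compose2[OF KK_cont[OF nulls_gam[OF nA bp]] wint_cont])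
       (use wint_range in blast)
  have Y: "continuous_on ({0..1} \<times> {0..1}) (\<lambda>p. KK e (del e \<alpha> \<phi> m) (zint p))"
    by (rule continuous_on_compose2[OF KK_cont[OF nulls_del[OF nA bp]] zint_cont])
       (use zint_range in blast)
  show ?thesis unfolding Hm_alt[abs_def] by (rule sq_prod[OF pD X Y])
qed

lemma Hm_ends: "Hm mul e \<alpha> \<phi> m (s, 0) = e" "Hm mul e \<alpha> \<phi> m (s, 1) = e"
proof -
  have "wint m (rr \<phi> m) (s, 0) = 0" "zint (s, 0) = 0"
    by (simp_all add: wint_def zint_def w0_0 w1_0 z1_0)
  then show "Hm mul e \<alpha> \<phi> m (s, 0) = e"
    by (simp add: Hm_alt KK_0[OF nulls_gam[OF nA bp]] KK_0[OF nulls_del[OF nA bp]] mul_e2)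
  have "wint m (rr \<phi> m) (s, 1) = 1" "zint (s, 1) = 1"
    by (simp_all add: wint_def zint_def w0_1 w1_1 z1_1 algebra_simps)
  then show "Hm mul e \<alpha> \<phi> m (s, 1) = e"
    by (simp add: Hm_alt KK_1 mul_e2)
qed

lemma del_small:
  assumes "x \<in> {0..1}" "x < gpt m 0"
  shows "KK e (del e \<alpha> \<phi> m) x = e"
proof -
  have x: "0 \<le> x" "x \<le> 1" using assms by auto
  show ?thesis
  proof (cases rule: gpt_cases[OF x])
    case 1 then show ?thesis by (simp add: KK_1)
  next
    case (2 n y)
    then have "n < m" using assms(2) gpt_less_iff[of y 0 n m] gpt_mono_n[of m n y] by force
    then show ?thesis using 2 by (simp add: KK_gpt del_def)
  qed
qed

lemma Hm_pre:
  assumes s: "s \<in> {0..1}" and t: "t \<in> {0..1}" and tm: "t < 1 - (1/2)^m"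
  shows "Hm mul e \<alpha> \<phi> m (s, t) = KK e (\<lambda>j. \<alpha> (\<phi> j)) t"
proof -
  define r where "r = rr \<phi> m"
  have mr': "m \<le> r" using mr2 by (simp add: r_def)
  have t1: "t < 1" using tm by (smt (verit) zero_less_power zero_less_divide_1_iff)
  obtain n y where ny: "0 \<le> y" "y < 1" "t = gpt n y" using gpt_rep[of t] t t1 by auto
  have nm: "n < m"
  proof (rule ccontr)
    assume "\<not> n < m"
    then have "gpt m 0 \<le> gpt n y" using gpt_mono_n[of m n y] ny by simp
    then show False using tm ny by (simp add: gpt_zero)
  qed
  have w: "wint m r (s, t) = t"
    using w0_eval[OF mr' ny(1,2), of n] w1_eval[OF mr' ny(1,2), of n] nm ny(3)
    by (simp add: wint_def algebra_simps)
  have z1t: "z1 t \<le> t" using t by (auto simp: z1_def)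
  have zr: "zint (s, t) \<in> {0..1}" using zint_range s t by auto
  have "zint (s, t) \<le> (1 - s) * t + s * t"
    unfolding zint_def using s z1t by (simp add: mult_left_mono)
  then have "zint (s, t) < gpt m 0" using tm by (simp add: gpt_zero algebra_simps)
  then have Z: "KK e (del e \<alpha> \<phi> m) (zint (s, t)) = e" using del_small zr by blast
  have "KK e (gam \<alpha> \<phi> m) t = \<alpha> (\<phi> n) y"
    using ny nm sig_props[OF bp, of m] by (simp add: KK_gpt gam_def)
  moreover have "KK e (\<lambda>j. \<alpha> (\<phi> j)) t = \<alpha> (\<phi> n) y" using ny by (simp add: KK_gpt)
  ultimately show ?thesis using w Z by (simp add: Hm_alt r_def[symmetric] mul_e2)
qed


lemma gam_vals:
  assumes "x \<in> {0..1}" "gpt m 0 \<le> x"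
  shows "KK e (gam \<alpha> \<phi> m) x \<in> insert e {\<alpha> (sig \<phi> m j) y |j y. 0 \<le> y \<and> y < 1 \<and> m \<le> j}"
proof -
  have x: "0 \<le> x" "x \<le> 1" using assms by auto
  show ?thesis
  proof (cases rule: gpt_cases[OF x])
    case 1 then show ?thesis by (simp add: KK_1)
  next
    case (2 n y)
    then have "m \<le> n" using assms(2) gpt_less_iff[of y 0 n m] by (cases "n < m") auto
    then have "KK e (gam \<alpha> \<phi> m) x = \<alpha> (sig \<phi> m (n + (rr \<phi> m - m))) y"
      using 2 by (simp add: KK_gpt gam_def)
    moreover have "\<alpha> (sig \<phi> m (n + (rr \<phi> m - m))) y \<in> {\<alpha> (sig \<phi> m j) y |j y. 0 \<le> y \<and> y < 1 \<and> m \<le> j}"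
      unfolding mem_Collect_eq by (intro exI[of _ "n + (rr \<phi> m - m)"] exI[of _ y]) (use 2 \<open>m \<le> n\<close> in auto)
    ultimately show ?thesis by simp
  qed
qed

lemma del_vals:
  assumes "x \<in> {0..1}"
  shows "KK e (del e \<alpha> \<phi> m) x \<in> insert e {\<alpha> (sig \<phi> m j) y |j y. 0 \<le> y \<and> y < 1 \<and> m \<le> j}"
proof -
  have x: "0 \<le> x" "x \<le> 1" using assms by auto
  show ?thesis
  proof (cases rule: gpt_cases[OF x])
    case 1 then show ?thesis by (simp add: KK_1)
  next
    case (2 n y)
    then show ?thesis by (auto simp: KK_gpt del_def)
  qed
qed

lemma tail_sub:
  assumes "\<forall>j\<ge>m. N \<le> sig \<phi> m j"
  shows "insert e {\<alpha> (sig \<phi> m j) y |j y. 0 \<le> y \<and> y < 1 \<and> m \<le> j} \<subseteq> TV e \<alpha> N"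
  using assms unfolding TV_def by blast

lemma wint_ge:
  assumes "s \<in> {0..1}" "t \<in> {0..1}" "gpt m 0 \<le> t"
  shows "gpt m 0 \<le> wint m r (s, t)"
proof -
  have t: "1 - (1/2)^m \<le> t" using assms(3) by (simp add: gpt_zero)
  have hm: "1 - (1/2::real)^m \<le> 1 - (1/2)^(Suc m)" using half_pow_mono[of m "Suc m"] by simp
  have a: "gpt m 0 \<le> w0 m r t" using t unfolding w0_def gpt_zero by (simp add: le_max_iff_disj)
  have b: "gpt m 0 \<le> w1 m r t" using t hm unfolding w1_def gpt_zero
    by (simp only: le_max_iff_disj min.bounded_iff) simp
  have "(1 - s) * gpt m 0 + s * gpt m 0 \<le> (1 - s) * w0 m r t + s * w1 m r t"
    using assms a b by (intro add_mono mult_left_mono) auto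
  then show ?thesis by (simp add: wint_def algebra_simps)
qed

lemma Hm_tail:
  assumes s: "s \<in> {0..1}" and t: "t \<in> {0..1}" and tm: "1 - (1/2)^m \<le> t"
    and N: "\<forall>j\<ge>m. N \<le> sig \<phi> m j"
  shows "\<exists>a b. a \<in> TV e \<alpha> N \<and> b \<in> TV e \<alpha> N \<and> Hm mul e \<alpha> \<phi> m (s, t) = mul a b"
proof -
  have p: "(s, t) \<in> {0..1} \<times> {0..1}" using s t by auto
  have tm': "gpt m 0 \<le> t" using tm by (simp add: gpt_zero)
  have "KK e (gam \<alpha> \<phi> m) (wint m (rr \<phi> m) (s, t)) \<in> insert e {\<alpha> (sig \<phi> m j) y |j y. 0 \<le> y \<and> y < 1 \<and> m \<le> j}"
    by (rule gam_vals[OF wint_range[OF p] wint_ge[OF s t tm']])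
  then have "KK e (gam \<alpha> \<phi> m) (wint m (rr \<phi> m) (s, t)) \<in> TV e \<alpha> N"
    using tail_sub[OF N] by blast
  moreover have "KK e (del e \<alpha> \<phi> m) (zint (s, t)) \<in> TV e \<alpha> N"
    using del_vals[OF zint_range[OF p]] tail_sub[OF N] by blast
  ultimately show ?thesis by (auto simp: Hm_alt)
qed

lemma gam_Vs:
  assumes "x \<in> {0..1}" shows "KK e (gam \<alpha> \<phi> m) x \<in> Vs e \<alpha>"
proof -
  have x: "0 \<le> x" "x \<le> 1" using assms by auto
  show ?thesis
  proof (cases rule: gpt_cases[OF x])
    case 1 then show ?thesis by (simp add: KK_1 Vs_def)
  next
    case (2 n y) then show ?thesis by (auto simp: KK_gpt gam_def Vs_def)
  qed
qed

lemma del_Vs: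
  assumes "x \<in> {0..1}" shows "KK e (del e \<alpha> \<phi> m) x \<in> Vs e \<alpha>"
proof -
  have x: "0 \<le> x" "x \<le> 1" using assms by auto
  show ?thesis
  proof (cases rule: gpt_cases[OF x])
    case 1 then show ?thesis by (simp add: KK_1 Vs_def)
  next
    case (2 n y) then show ?thesis by (auto simp: KK_gpt del_def Vs_def)
  qed
qed

lemma Hm_vals:
  assumes "p \<in> {0..1} \<times> {0..1}"
  shows "\<exists>a b. a \<in> Vs e \<alpha> \<and> b \<in> Vs e \<alpha> \<and> Hm mul e \<alpha> \<phi> m p = mul a b"
proof -
  have "KK e (gam \<alpha> \<phi> m) (wint m (rr \<phi> m) p) \<in> Vs e \<alpha>" by (rule gam_Vs[OF wint_range[OF assms]])
  moreover have "KK e (del e \<alpha> \<phi> m) (zint p) \<in> Vs e \<alpha>" by (rule del_Vs[OF zint_range[OF assms]])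
  ultimately show ?thesis unfolding Hm_alt by blast
qed

end

lemma slot_ge:
  assumes "1 - (1/2)^N < s" "s < 1"
  shows "N \<le> slot s"
proof -
  have s0: "0 \<le> s" using assms(1) hp_le1[of N] by linarith
  obtain n y where ny: "0 \<le> y" "y < 1" "s = gpt n y" using gpt_rep[of s] s0 assms(2) by auto
  show ?thesis
  proof (rule ccontr)
    assume "\<not> N \<le> slot s"
    then have "n < N" using ny by (simp add: slot_gpt)
    then have "gpt n y < gpt N 0" using gpt_less_iff[of y 0 n N] ny by simp
    then show False using assms(1) ny by (simp add: gpt_zero)
  qed
qed

lemma loc_range: "0 \<le> s \<Longrightarrow> s < 1 \<Longrightarrow> loc s \<in> {0..1}"
  using gpt_rep[of s] by auto

lemma glue_at1:
  fixes Hs :: "nat \<Rightarrow> real \<times> real \<Rightarrow> 'a::topological_space" and B :: "real \<Rightarrow> 'a"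
  assumes cB: "continuous_on {0..1} B"
    and pre: "\<And>m s t. s \<in> {0..1} \<Longrightarrow> t \<in> {0..1} \<Longrightarrow> t < 1 - (1/2)^m \<Longrightarrow> Hs m (s, t) = B t"
    and tail: "\<And>V. open V \<Longrightarrow> B 1 \<in> V \<Longrightarrow>
        \<exists>M. \<forall>m\<ge>M. \<forall>s\<in>{0..1}. \<forall>t\<in>{0..1}. 1 - (1/2)^m \<le> t \<longrightarrow> Hs m (s, t) \<in> V"
    and t0: "t0 \<in> {0..1}"
    and g: "\<And>p. g p = (if fst p < 1 then Hs (slot (fst p)) (loc (fst p), snd p) else B (snd p))"
  shows "continuous (at (1, t0) within {0..1} \<times> {0..1}) g"
  unfolding continuous_within_topological
proof (intro allI impI)
  fix V assume V: "open V" "g (1, t0) \<in> V"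
  then have Bt0: "B t0 \<in> V" by (simp add: g)
  have "continuous (at t0 within {0..1}) B" using cB t0 by (simp add: continuous_on_eq_continuous_within)
  then obtain Ob where Ob: "open Ob" "t0 \<in> Ob" "\<And>t. t \<in> {0..1} \<Longrightarrow> t \<in> Ob \<Longrightarrow> B t \<in> V"
    using V(1) Bt0 unfolding continuous_within_topological by metis
  show "\<exists>A. open A \<and> (1, t0) \<in> A \<and> (\<forall>y\<in>{0..1} \<times> {0..1}. y \<in> A \<longrightarrow> g y \<in> V)"
  proof (cases "t0 < 1")
    case True
    obtain N where N: "(1/2::real)^N < 1 - t0" using real_arch_pow_inv[of "1 - t0" "1/2"] True by auto
    define A where "A = {1 - (1/2::real)^N <..} \<times> (Ob \<inter> {..< 1 - (1/2)^N})"
    show ?thesis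
    proof (intro exI conjI ballI impI)
      show "open A" unfolding A_def using Ob(1) by (intro open_Times) auto
      show "(1, t0) \<in> A" unfolding A_def using Ob(2) N by auto
      fix p assume p: "p \<in> {0..1} \<times> {0..1}" "p \<in> A"
      obtain s t where st: "p = (s, t)" by (cases p)
      have tV: "B t \<in> V" using Ob(3)[of t] p st by (auto simp: A_def)
      show "g p \<in> V"
      proof (cases "s < 1")
        case True
        have "N \<le> slot s" using slot_ge[of N s] p st True by (auto simp: A_def)
        then have "(1/2::real)^(slot s) \<le> (1/2)^N" by (rule half_pow_mono)
        moreover have "t < 1 - (1/2)^N" using p st by (auto simp: A_def)
        ultimately have "t < 1 - (1/2)^(slot s)" by linarith
        then have "Hs (slot s) (loc s, t) = B t"
          using pre[of "loc s" t "slot s"] loc_range[of s] p st True by auto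
        then show ?thesis using st True tV by (simp add: g)
      qed (use st tV in \<open>simp add: g\<close>)
    qed
  next
    case False
    then have t1: "t0 = 1" using t0 by auto
    obtain M where M: "\<forall>m\<ge>M. \<forall>s\<in>{0..1}. \<forall>t\<in>{0..1}. 1 - (1/2)^m \<le> t \<longrightarrow> Hs m (s, t) \<in> V"
      using tail[OF V(1)] Bt0 t1 by blast
    define A where "A = {1 - (1/2::real)^M <..} \<times> Ob"
    show ?thesis
    proof (intro exI conjI ballI impI)
      show "open A" unfolding A_def using Ob(1) by (intro open_Times) auto
      show "(1, t0) \<in> A" unfolding A_def using Ob(2) by auto
      fix p assume p: "p \<in> {0..1} \<times> {0..1}" "p \<in> A"
      obtain s t where st: "p = (s, t)" by (cases p)
      have tV: "B t \<in> V" using Ob(3)[of t] p st by (auto simp: A_def)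
      show "g p \<in> V"
      proof (cases "s < 1")
        case True
        have sM: "M \<le> slot s" using slot_ge[of M s] p st True by (auto simp: A_def)
        have ls: "loc s \<in> {0..1}" using loc_range[of s] p st True by auto
        have tt: "t \<in> {0..1}" using p st by auto
        have "Hs (slot s) (loc s, t) \<in> V"
        proof (cases "1 - (1/2)^(slot s) \<le> t")
          case True then show ?thesis using M sM ls tt by blast
        next
          case False then show ?thesis using pre[of "loc s" t "slot s"] ls tt tV by simp
        qed
        then show ?thesis using st True by (simp add: g)
      qed (use st tV in \<open>simp add: g\<close>)
    qed
  qed
qed


lemma TV_rep:
  assumes nA: "nulls e \<alpha>" and a: "a \<in> TV e \<alpha> N"
  shows "\<exists>u. 1 - (1/2)^N \<le> u \<and> u \<le> 1 \<and> a = KK e \<alpha> u"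
proof (cases "a = e")
  case True
  then show ?thesis using hp_le1[of N] by (intro exI[of _ 1]) (simp add: KK_1)
next
  case False
  then have "a \<in> {\<alpha> k y |k y. 0 \<le> y \<and> y < 1 \<and> N \<le> k}" using a unfolding TV_def by simp
  then obtain k y where ky: "a = \<alpha> k y" "0 \<le> y" "y < 1" "N \<le> k" by blast
  have "gpt N 0 \<le> gpt k y" using gpt_mono_n[of N k y] ky by simp
  moreover have "gpt k y < 1" using gpt_less_1[of y k] ky by simp
  ultimately show ?thesis using ky by (intro exI[of _ "gpt k y"]) (simp add: gpt_zero KK_gpt)
qed

lemma JC:
  assumes pD: "pre_Delta_monoid mul e" and nA: "nulls e \<alpha>" and V: "open V" "e \<in> V"
  shows "\<exists>N. \<forall>a\<in>TV e \<alpha> N. \<forall>b\<in>TV e \<alpha> N. mul a b \<in> V"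
proof -
  define A where "A = KK e \<alpha>"
  have cA: "continuous_on {0..1} A" unfolding A_def by (rule KK_cont[OF nA])
  have cX: "continuous_on ({0..1} \<times> {0..1}) (\<lambda>p. A (fst p))"
    by (rule continuous_on_compose2[OF cA]) (auto intro!: continuous_intros)
  have cY: "continuous_on ({0..1} \<times> {0..1}) (\<lambda>p. A (snd p))"
    by (rule continuous_on_compose2[OF cA]) (auto intro!: continuous_intros)
  have cP: "continuous_on ({0..1} \<times> {0..1}) (\<lambda>p. mul (A (fst p)) (A (snd p)))"
    by (rule sq_prod[OF pD cX cY])
  have P11: "mul (A (fst (1::real, 1::real))) (A (snd (1::real, 1::real))) = e"
    using pD_id[OF pD] by (simp add: A_def KK_1)
  have "continuous (at (1::real, 1::real) within {0..1} \<times> {0..1}) (\<lambda>p. mul (A (fst p)) (A (snd p)))"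
    using cP by (simp add: continuous_on_eq_continuous_within)
  then obtain Ob where Ob: "open Ob" "(1, 1) \<in> Ob"
    "\<And>q. q \<in> {0..1} \<times> {0..1} \<Longrightarrow> q \<in> Ob \<Longrightarrow> mul (A (fst q)) (A (snd q)) \<in> V"
    using V P11 unfolding continuous_within_topological by metis
  obtain \<epsilon> where \<epsilon>: "\<epsilon> > 0" "ball (1, 1) \<epsilon> \<subseteq> Ob" using Ob(1,2) open_contains_ball by blast
  obtain N where N: "(1/2::real)^N < \<epsilon> / 2" using real_arch_pow_inv[of "\<epsilon> / 2" "1/2"] \<epsilon>(1) by auto
  show ?thesis
  proof (intro exI ballI)
    fix a b assume a: "a \<in> TV e \<alpha> N" and b: "b \<in> TV e \<alpha> N"
    obtain u where u: "1 - (1/2)^N \<le> u" "u \<le> 1" "a = A u" using TV_rep[OF nA a] A_def by blast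
    obtain v where v: "1 - (1/2)^N \<le> v" "v \<le> 1" "b = A v" using TV_rep[OF nA b] A_def by blast
    have "dist (1, 1) (u, v) \<le> dist 1 u + dist 1 v"
      unfolding dist_Pair_Pair by (rule sqrt_sum_squares_le_sum_abs[THEN order_trans]) (simp add: dist_real_def)
    also have "\<dots> \<le> (1/2)^N + (1/2)^N" using u v by (simp add: dist_real_def)
    also have "\<dots> < \<epsilon>" using N by simp
    finally have "(u, v) \<in> Ob" using \<epsilon>(2) by auto
    moreover have "(u, v) \<in> {0..1} \<times> {0..1}" using u v hp_le1[of N] by auto
    ultimately show "mul a b \<in> V" using Ob(3)[of "(u, v)"] u v by simp
  qed
qed


lemma TAIL:
  assumes pD: "pre_Delta_monoid mul e" and nA: "nulls e \<alpha>" and bp: "bij \<phi>"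
    and V: "open V" "e \<in> V"
  shows "\<exists>M. \<forall>m\<ge>M. \<forall>s\<in>{0..1::real}. \<forall>t\<in>{0..1::real}. 1 - (1/2)^m \<le> t \<longrightarrow> Hm mul e \<alpha> \<phi> m (s, t) \<in> V"
proof -
  obtain N where N: "\<forall>a\<in>TV e \<alpha> N. \<forall>b\<in>TV e \<alpha> N. mul a b \<in> V" using JC[OF pD nA V] by blast
  obtain M where M: "\<forall>m\<ge>M. \<forall>j\<ge>m. N \<le> sig \<phi> m j" using sig_tail[OF bp] by blast
  show ?thesis
  proof (intro exI allI impI ballI)
    fix m and s t :: real assume m: "M \<le> m" and s: "s \<in> {0..1}" and t: "t \<in> {0..1}" and tm: "1 - (1/2)^m \<le> t"
    have "\<forall>j\<ge>m. N \<le> sig \<phi> m j" using M m by blast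
    then obtain a b where "a \<in> TV e \<alpha> N" "b \<in> TV e \<alpha> N" "Hm mul e \<alpha> \<phi> m (s, t) = mul a b"
      using Hm_tail[OF pD nA bp s t tm] by blast
    then show "Hm mul e \<alpha> \<phi> m (s, t) \<in> V" using N by simp
  qed
qed

lemma Vs_sub:
  assumes nA: "nulls e \<alpha>"
  shows "Vs e \<alpha> \<subseteq> path_image (inf_concat e \<alpha>)"
proof
  fix x assume "x \<in> Vs e \<alpha>"
  then consider "x = e" | n y where "x = \<alpha> n y" "0 \<le> y" "y < 1" unfolding Vs_def by blast
  then show "x \<in> path_image (inf_concat e \<alpha>)"
  proof cases
    case 1
    have "inf_concat e \<alpha> 1 = e" by (simp add: inf_concat_eq)
    then show ?thesis using 1 unfolding path_image_def by (intro image_eqI[of _ _ 1]) auto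
  next
    case (2 n y)
    have h: "hpt n y \<in> {0..1}" using hpt_bounds[OF 2(2,3), of n] by auto
    have "inf_concat e \<alpha> (hpt n y) = \<alpha> n y"
      using hpt_bounds[OF 2(2,3)] hk_hpt[OF 2(2,3)] by (simp add: inf_concat_eq)
    then show ?thesis using 2 h unfolding path_image_def by (intro image_eqI[of _ _ "hpt n y"]) auto
  qed
qed

lemma KK_Vs:
  assumes "x \<in> {0..1}"
  shows "KK e (\<lambda>j. \<alpha> (g j)) x \<in> Vs e \<alpha>"
proof -
  have x: "0 \<le> x" "x \<le> 1" using assms by auto
  show ?thesis
  proof (cases rule: gpt_cases[OF x])
    case 1 then show ?thesis by (simp add: KK_1 Vs_def)
  next
    case (2 n y) then show ?thesis by (auto simp: KK_gpt Vs_def)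
  qed
qed

lemma main_KK:
  assumes pD: "pre_Delta_monoid mul e" and nA: "nulls e \<alpha>" and bp: "bij \<phi>"
  defines "S \<equiv> set_mult mul (path_image (inf_concat e \<alpha>)) (path_image (inf_concat e \<alpha>))"
  shows "homotopic_paths S (KK e \<alpha>) (KK e (\<lambda>j. \<alpha> (\<phi> j)))"
proof -
  define B where "B = KK e (\<lambda>j. \<alpha> (\<phi> j))"
  define Hf where "Hf = (\<lambda>p. if fst p < 1 then Hm mul e \<alpha> \<phi> (slot (fst p)) (loc (fst p), snd p) else B (snd p))"
  have idm: "mul x e = x" "mul e x = x" for x using pD_id[OF pD] by auto
  have nB: "nulls e (\<lambda>j. \<alpha> (\<phi> j))" using nulls_inj[OF nA bij_is_inj[OF bp]] .
  have cB: "continuous_on {0..1} B" unfolding B_def by (rule KK_cont[OF nB])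
  have VS: "mul a b \<in> S" if "a \<in> Vs e \<alpha>" "b \<in> Vs e \<alpha>" for a b
    using that Vs_sub[OF nA] unfolding S_def set_mult_def by blast
  have eV: "e \<in> Vs e \<alpha>" by (simp add: Vs_def)
  have cont: "continuous_on ({0..1} \<times> {0..1}) Hf"
    unfolding continuous_on_eq_continuous_within
  proof
    fix p :: "real \<times> real" assume p: "p \<in> {0..1} \<times> {0..1}"
    obtain s t where st: "p = (s, t)" by (cases p)
    show "continuous (at p within {0..1} \<times> {0..1}) Hf"
    proof (cases "s < 1")
      case True
      show ?thesis unfolding st
      proof (rule glue_cont_lt1[where f = "Hm mul e \<alpha> \<phi>"])
        show "closed {0..1::real}" by simp
        show "\<And>m. continuous_on ({0..1} \<times> {0..1}) (Hm mul e \<alpha> \<phi> m)" by (rule Hm_cont[OF pD nA bp])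
        show "\<And>m t. t \<in> {0..1} \<Longrightarrow> Hm mul e \<alpha> \<phi> m (1, t) = Hm mul e \<alpha> \<phi> (Suc m) (0, t)"
          using P0[OF pD nA bp] P1[OF pD nA bp] by simp
        show "\<And>p. p \<in> {0..<1} \<times> {0..1} \<Longrightarrow> Hf p = Hm mul e \<alpha> \<phi> (slot (fst p)) (loc (fst p), snd p)"
          by (auto simp: Hf_def)
      qed (use True p st in auto)
    next
      case False
      then have s1: "s = 1" using p st by auto
      show ?thesis unfolding st s1
      proof (rule glue_at1[where Hs = "Hm mul e \<alpha> \<phi>" and B = B])
        show "continuous_on {0..1} B" by (rule cB)
        show "\<And>m s t. s \<in> {0..1} \<Longrightarrow> t \<in> {0..1} \<Longrightarrow> t < 1 - (1/2)^m \<Longrightarrow> Hm mul e \<alpha> \<phi> m (s, t) = B t"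
          unfolding B_def by (rule Hm_pre[OF pD nA bp])
        show "\<And>V. open V \<Longrightarrow> B 1 \<in> V \<Longrightarrow>
           \<exists>M. \<forall>m\<ge>M. \<forall>s\<in>{0..1}. \<forall>t\<in>{0..1}. 1 - (1/2)^m \<le> t \<longrightarrow> Hm mul e \<alpha> \<phi> m (s, t) \<in> V"
          using TAIL[OF pD nA bp] by (simp add: B_def KK_1)
        show "\<And>p. Hf p = (if fst p < 1 then Hm mul e \<alpha> \<phi> (slot (fst p)) (loc (fst p), snd p) else B (snd p))"
          by (simp add: Hf_def)
      qed (use p st in auto)
    qed
  qed
  have s0: "slot 0 = 0" "loc 0 = 0" using slot_loc_low[of 0] by auto
  show ?thesis
    unfolding homotopic_paths
  proof (intro exI conjI ballI)
    show "continuous_on ({0..1} \<times> {0..1}) Hf" by (rule cont)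
    show "Hf \<in> {0..1} \<times> {0..1} \<rightarrow> S"
    proof
      fix p :: "real \<times> real" assume p: "p \<in> {0..1} \<times> {0..1}"
      show "Hf p \<in> S"
      proof (cases "fst p < 1")
        case True
        have "(loc (fst p), snd p) \<in> {0..1} \<times> {0..1}" using loc_range[of "fst p"] p True by auto
        then obtain a b where "a \<in> Vs e \<alpha>" "b \<in> Vs e \<alpha>"
          "Hm mul e \<alpha> \<phi> (slot (fst p)) (loc (fst p), snd p) = mul a b"
          using Hm_vals[OF pD nA bp] by blast
        then show ?thesis using True VS by (simp add: Hf_def)
      next
        case False
        have "B (snd p) \<in> Vs e \<alpha>" unfolding B_def by (rule KK_Vs) (use p in auto)
        then have "mul (B (snd p)) e \<in> S" using VS eV by blast
        then show ?thesis using False by (simp add: Hf_def idm)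
      qed
    qed
    fix x :: real assume x: "x \<in> {0..1}"
    show "Hf (0, x) = KK e \<alpha> x" using P0[OF pD nA bp x, of 0] s0 by (simp add: Hf_def)
    show "Hf (1, x) = KK e (\<lambda>j. \<alpha> (\<phi> j)) x" by (simp add: Hf_def B_def)
  next
    fix t :: real assume t: "t \<in> {0..1}"
    have e0: "Hf (t, 0) = e" "Hf (t, 1) = e"
      using Hm_ends[OF pD nA bp] KK_0[OF nB] by (simp_all add: Hf_def B_def KK_1)
    show "pathstart (Hf \<circ> Pair t) = pathstart (KK e \<alpha>)"
      using e0 KK_0[OF nA] by (simp add: pathstart_def)
    show "pathfinish (Hf \<circ> Pair t) = pathfinish (KK e \<alpha>)"
      using e0 by (simp add: pathfinish_def KK_1)
  qed
qed

theorem mainTheorem10: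
  fixes mul :: "'a::topological_space \<Rightarrow> 'a \<Rightarrow> 'a" and e :: 'a
    and \<alpha> :: "nat \<Rightarrow> real \<Rightarrow> 'a" and \<phi> :: "nat \<Rightarrow> nat"
  assumes "pre_Delta_monoid mul e"
    and "path_connected (UNIV :: 'a set)"
    and "null_sequence e \<alpha>"
    and "bij \<phi>"
  shows "homotopic_paths
           (set_mult mul (path_image (inf_concat e \<alpha>)) (path_image (inf_concat e \<alpha>)))
           (inf_concat e \<alpha>) (inf_concat e (\<lambda>n. \<alpha> (\<phi> n)))"
proof -
  define S where "S = set_mult mul (path_image (inf_concat e \<alpha>)) (path_image (inf_concat e \<alpha>))"
  have pD: "pre_Delta_monoid mul e" and bp: "bij \<phi>" using assms by auto
  have nA: "nulls e \<alpha>" using null_sequence_nulls assms(3) by blast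
  have nB: "nulls e (\<lambda>j. \<alpha> (\<phi> j))" using nulls_inj[OF nA bij_is_inj[OF bp]] .
  have idm: "mul x e = x" for x using pD_id[OF pD] by auto
  have VS: "x \<in> S" if "x \<in> Vs e \<alpha>" for x
  proof -
    have "e \<in> path_image (inf_concat e \<alpha>)" using Vs_sub[OF nA] by (auto simp: Vs_def)
    then have "mul x e \<in> S" using that Vs_sub[OF nA] unfolding S_def set_mult_def by blast
    then show ?thesis by (simp add: idm)
  qed
  have piA: "path_image (KK e \<alpha>) \<subseteq> S"
  proof
    fix x assume "x \<in> path_image (KK e \<alpha>)"
    then obtain u where "u \<in> {0..1}" "x = KK e \<alpha> u" unfolding path_image_def by auto
    then show "x \<in> S" using KK_Vs[of u e \<alpha> id] VS by simp
  qed
  have piB: "path_image (KK e (\<lambda>j. \<alpha> (\<phi> j))) \<subseteq> S"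
  proof
    fix x assume "x \<in> path_image (KK e (\<lambda>j. \<alpha> (\<phi> j)))"
    then obtain u where "u \<in> {0..1}" "x = KK e (\<lambda>j. \<alpha> (\<phi> j)) u" unfolding path_image_def by auto
    then show "x \<in> S" using KK_Vs[of u e \<alpha> \<phi>] VS by simp
  qed
  have pA: "path (KK e \<alpha>)" unfolding path_def by (rule KK_cont[OF nA])
  have pB: "path (KK e (\<lambda>j. \<alpha> (\<phi> j)))" unfolding path_def by (rule KK_cont[OF nB])
  have h1: "homotopic_paths S (inf_concat e \<alpha>) (KK e \<alpha>)"
    by (rule homotopic_paths_sym[OF KK_inf_homotopic[OF pA piA]])
  have h2: "homotopic_paths S (KK e \<alpha>) (KK e (\<lambda>j. \<alpha> (\<phi> j)))"
    unfolding S_def by (rule main_KK[OF pD nA bp])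
  have h3: "homotopic_paths S (KK e (\<lambda>j. \<alpha> (\<phi> j))) (inf_concat e (\<lambda>j. \<alpha> (\<phi> j)))"
    by (rule KK_inf_homotopic[OF pB piB])
  show ?thesis using homotopic_paths_trans[OF homotopic_paths_trans[OF h1 h2] h3] by (simp add: S_def)
qed

end
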